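(* Let $V$ be a braided vector space of diagonal type over a field $F$ of characteristic zero with basis $x_1,\dots,x_n$ and braiding $C(x_i\otimes x_j)=p_{i,j}x_j\otimes x_i$, and let $\mathfrak B(V)$ be its Nichols algebra. The following are equivalent: (1) $\mathfrak L(V)=\mathfrak L(V)_L$; (2) $\mathfrak L(V)=\mathfrak L^-(V)$; (3) $p_{i,i}^2=1$ for all $i$ and $p_{i,j}=p_{j,i}=1$ for all $1\le i\ne j\le n$. In this case $\mathfrak L(V)=\mathfrak L(V)_L=V$.
   Context: $\mathfrak B(V)=T(V)/\bigoplus_{m\ge2}\ker S_m$ is $\mathbb Z^n$-graded with $\deg x_i=e_i$; for homogeneous $u,v$ with $\deg u=\sum a_ie_i$, $\deg v=\sum b_je_j$ put $p_{u,v}=\prod p_{i,j}^{a_ib_j}$. $\mathfrak L(V)$ is the smallest subspace of $\mathfrak B(V)$ containing $V$ and closed under the braided bracket $[u,v]=uv-p_{u,v}vu$ (homogeneous $u,v$, extended bilinearly). $\mathfrak L(V)_L$ is the Lie subalgebra of $\mathfrak B(V)$ generated by $V$ under $[u,v]_L=p_{v,u}uv-p_{u,v}vu$, and $\mathfrak L^-(V)$ the Lie subalgebra generated by $V$ under the commutator $[u,v]^-=uv-vu$. *)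

theory Defs
  imports Main "HOL-Combinatorics.Permutations"
begin

text \<open>Tensor algebra T(V) on the basis x_0,...,x_{n-1} (indices shifted by one):
  an element is a finitely supported coefficient function on words (lists of
  letters < n), the word [i1,...,im] standing for x_i1 x_i2 ... x_im.\<close>

definition tensor :: "nat \<Rightarrow> (nat list \<Rightarrow> 'a::field) \<Rightarrow> bool" where
  "tensor n u \<longleftrightarrow> finite {w. u w \<noteq> 0} \<and> (\<forall>w. u w \<noteq> 0 \<longrightarrow> set w \<subseteq> {..<n})"

definition tmul :: "(nat list \<Rightarrow> 'a::field) \<Rightarrow> (nat list \<Rightarrow> 'a) \<Rightarrow> nat list \<Rightarrow> 'a" where
  "tmul u v = (\<lambda>w. \<Sum>k\<le>length w. u (take k w) * v (drop k w))"

definition tadd :: "(nat list \<Rightarrow> 'a::field) \<Rightarrow> (nat list \<Rightarrow> 'a) \<Rightarrow> nat list \<Rightarrow> 'a" where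
  "tadd u v = (\<lambda>w. u w + v w)"

definition tsmult :: "'a::field \<Rightarrow> (nat list \<Rightarrow> 'a) \<Rightarrow> nat list \<Rightarrow> 'a" where
  "tsmult c u = (\<lambda>w. c * u w)"

definition tdiff :: "(nat list \<Rightarrow> 'a::field) \<Rightarrow> (nat list \<Rightarrow> 'a) \<Rightarrow> nat list \<Rightarrow> 'a" where
  "tdiff u v = (\<lambda>w. u w - v w)"

definition gen :: "nat \<Rightarrow> nat list \<Rightarrow> 'a::field" where
  "gen i = (\<lambda>w. if w = [i] then 1 else 0)"

definition Vsp :: "nat \<Rightarrow> (nat list \<Rightarrow> 'a::field) set" where
  "Vsp n = {(\<lambda>w. \<Sum>i<n. c i * gen i w) | c. True}"

definition homog :: "nat \<Rightarrow> (nat \<Rightarrow> nat) \<Rightarrow> (nat list \<Rightarrow> 'a::field) \<Rightarrow> bool" where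
  "homog n \<alpha> u \<longleftrightarrow> tensor n u \<and> (\<forall>w. u w \<noteq> 0 \<longrightarrow> (\<forall>i. count_list w i = \<alpha> i))"

definition pchar :: "nat \<Rightarrow> (nat \<Rightarrow> nat \<Rightarrow> 'a::field) \<Rightarrow> (nat \<Rightarrow> nat) \<Rightarrow> (nat \<Rightarrow> nat) \<Rightarrow> 'a" where
  "pchar n p \<alpha> \<beta> = (\<Prod>i<n. \<Prod>j<n. p i j ^ (\<alpha> i * \<beta> j))"

text \<open>Quantum symmetrizer S_m for the diagonal braiding c(x_i x_j) = p_ij x_j x_i:
  S_m = sum over sigma in S_m of the Matsumoto lift T_sigma; T_sigma moves the letter in
  position a to position sigma a, with a factor p_{w_a,w_b} for every inversion a<b,
  sigma a > sigma b.  symc w w' is the coefficient of the word w' in S_m(w).\<close>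
definition symc :: "(nat \<Rightarrow> nat \<Rightarrow> 'a::field) \<Rightarrow> nat list \<Rightarrow> nat list \<Rightarrow> 'a" where
  "symc p w w' = (\<Sum>\<sigma>\<in>{\<sigma>. \<sigma> permutes {..<length w}}.
      if length w' = length w \<and> (\<forall>a<length w. w' ! (\<sigma> a) = w ! a)
      then (\<Prod>(a,b)\<in>{(a,b). a < b \<and> b < length w \<and> \<sigma> b < \<sigma> a}. p (w ! a) (w ! b))
      else 0)"

definition qsym :: "(nat \<Rightarrow> nat \<Rightarrow> 'a::field) \<Rightarrow> (nat list \<Rightarrow> 'a) \<Rightarrow> nat list \<Rightarrow> 'a" where
  "qsym p u = (\<lambda>w'. \<Sum>w\<in>{w. u w \<noteq> 0}. u w * symc p w w')"

definition comp :: "nat \<Rightarrow> (nat list \<Rightarrow> 'a::field) \<Rightarrow> nat list \<Rightarrow> 'a" where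
  "comp m u = (\<lambda>w. if length w = m then u w else 0)"

text \<open>The defining ideal  I = direct sum over m >= 2 of ker S_m,  so B(V) = T(V)/I.\<close>
definition nichols_ideal :: "nat \<Rightarrow> (nat \<Rightarrow> nat \<Rightarrow> 'a::field) \<Rightarrow> (nat list \<Rightarrow> 'a) set" where
  "nichols_ideal n p = {u. tensor n u \<and> (\<forall>w. length w < 2 \<longrightarrow> u w = 0)
      \<and> (\<forall>m\<ge>2. qsym p (comp m u) = (\<lambda>_. 0))}"

text \<open>Subspaces of B(V) are represented by their preimages in T(V) (subspaces containing I).
  closure n p br = preimage of the smallest subspace of B(V) containing V and closed under the
  bracket br (applied to homogeneous elements of degrees alpha, beta).\<close>
inductive_set closure_br :: "nat \<Rightarrow> (nat \<Rightarrow> nat \<Rightarrow> 'a::field)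
    \<Rightarrow> ((nat \<Rightarrow> nat) \<Rightarrow> (nat \<Rightarrow> nat) \<Rightarrow> (nat list \<Rightarrow> 'a) \<Rightarrow> (nat list \<Rightarrow> 'a) \<Rightarrow> nat list \<Rightarrow> 'a)
    \<Rightarrow> (nat list \<Rightarrow> 'a) set"
  for n p br where
  gen_in: "v \<in> Vsp n \<Longrightarrow> v \<in> closure_br n p br"
| ideal_in: "u \<in> nichols_ideal n p \<Longrightarrow> u \<in> closure_br n p br"
| add_in: "u \<in> closure_br n p br \<Longrightarrow> v \<in> closure_br n p br \<Longrightarrow> tadd u v \<in> closure_br n p br"
| smult_in: "u \<in> closure_br n p br \<Longrightarrow> tsmult c u \<in> closure_br n p br"
| br_in: "u \<in> closure_br n p br \<Longrightarrow> v \<in> closure_br n p br \<Longrightarrow> homog n \<alpha> u \<Longrightarrow> homog n \<beta> v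
          \<Longrightarrow> br \<alpha> \<beta> u v \<in> closure_br n p br"

definition braided_br where
  "braided_br n p = (\<lambda>\<alpha> \<beta> u v. tdiff (tmul u v) (tsmult (pchar n p \<alpha> \<beta>) (tmul v u)))"

definition L_br where
  "L_br n p = (\<lambda>\<alpha> \<beta> u v. tdiff (tsmult (pchar n p \<beta> \<alpha>) (tmul u v)) (tsmult (pchar n p \<alpha> \<beta>) (tmul v u)))"

definition comm_br where
  "comm_br = (\<lambda>\<alpha> \<beta> u v. tdiff (tmul u v) (tmul v u))"

definition LV where "LV n p = closure_br n p (braided_br n p)"
definition LV_L where "LV_L n p = closure_br n p (L_br n p)"
definition LV_minus where "LV_minus n p = closure_br n p comm_br"

definition V_mod where
  "V_mod n p = {tadd v u | v u. v \<in> Vsp n \<and> u \<in> nichols_ideal n p}"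

end

theory Submission
  imports Defs
begin


definition Invs :: "nat \<Rightarrow> (nat \<Rightarrow> nat) \<Rightarrow> (nat \<times> nat) set" where
  "Invs N \<sigma> = {(a,b). a < b \<and> b < N \<and> \<sigma> b < \<sigma> a}"

lemma perm_intro:
  assumes "finite S" "f ` S \<subseteq> S" "inj_on f S" "\<And>x. x \<notin> S \<Longrightarrow> f x = x"
  shows "f permutes S"
  using assms by (intro bij_imp_permutes) (simp_all add: bij_betw_def endo_inj_surj)

definition ins :: "nat \<Rightarrow> nat \<Rightarrow> (nat \<Rightarrow> nat) \<Rightarrow> nat \<Rightarrow> nat" where
  "ins m k \<tau> = (\<lambda>a. if a < m then (if \<tau> a < k then \<tau> a else Suc (\<tau> a)) else if a = m then k else a)"

definition rem :: "nat \<Rightarrow> nat \<Rightarrow> (nat \<Rightarrow> nat) \<Rightarrow> nat \<Rightarrow> nat" where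
  "rem m k \<sigma> = (\<lambda>a. if a < m then (if \<sigma> a < k then \<sigma> a else \<sigma> a - 1) else a)"

lemma ins_perm:
  assumes t: "\<tau> permutes {..<m}" and k: "k \<le> m"
  shows "ins m k \<tau> permutes {..<Suc m}"
proof (rule perm_intro)
  have lt: "\<And>a. a < m \<Longrightarrow> \<tau> a < m" using permutes_in_image[OF t] by auto
  have inj: "\<And>a b. \<tau> a = \<tau> b \<Longrightarrow> a = b" using permutes_inj[OF t] by (auto dest: injD)
  show "ins m k \<tau> ` {..<Suc m} \<subseteq> {..<Suc m}"
    using lt k by (auto simp: ins_def)
  show "inj_on (ins m k \<tau>) {..<Suc m}"
  proof (rule inj_onI)
    fix a b assume a: "a \<in> {..<Suc m}" and b: "b \<in> {..<Suc m}" and e: "ins m k \<tau> a = ins m k \<tau> b"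
    show "a = b"
    proof (cases "a < m")
      case True
      note ta = lt[OF True]
      show ?thesis
      proof (cases "b < m")
        case True
        then show ?thesis using e \<open>a < m\<close> inj by (auto simp: ins_def split: if_splits)
      next
        case False
        then have "b = m" using b by auto
        then show ?thesis using e \<open>a < m\<close> by (auto simp: ins_def split: if_splits)
      qed
    next
      case False
      then have am: "a = m" using a by auto
      show ?thesis
      proof (cases "b < m")
        case True
        then show ?thesis using e am by (auto simp: ins_def split: if_splits)
      next
        case False
        then show ?thesis using b am by auto
      qed
    qed
  qed
qed (auto simp: ins_def)

lemma rem_perm:
  assumes s: "\<sigma> permutes {..<Suc m}" and k: "\<sigma> m = k"
  shows "rem m k \<sigma> permutes {..<m}"
proof (rule perm_intro)
  have lt: "\<And>a. a < Suc m \<Longrightarrow> \<sigma> a < Suc m" using permutes_in_image[OF s] by auto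
  have inj: "\<And>a b. \<sigma> a = \<sigma> b \<Longrightarrow> a = b" using permutes_inj[OF s] by (auto dest: injD)
  have km: "k < Suc m" using lt k by auto
  have ne: "\<And>a. a < m \<Longrightarrow> \<sigma> a \<noteq> k" using inj k by force
  show "rem m k \<sigma> ` {..<m} \<subseteq> {..<m}"
  proof
    fix x assume "x \<in> rem m k \<sigma> ` {..<m}"
    then obtain a where a: "a < m" "x = rem m k \<sigma> a" by auto
    have "\<sigma> a < Suc m" using lt a by auto
    then show "x \<in> {..<m}" using a ne[OF a(1)] km by (auto simp: rem_def)
  qed
  show "inj_on (rem m k \<sigma>) {..<m}"
  proof (rule inj_onI)
    fix a b assume a: "a \<in> {..<m}" and b: "b \<in> {..<m}" and e: "rem m k \<sigma> a = rem m k \<sigma> b"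
    have "\<sigma> a \<noteq> k" "\<sigma> b \<noteq> k" using ne a b by auto
    then have "\<sigma> a = \<sigma> b" using e a b by (auto simp: rem_def split: if_splits)
    then show "a = b" using inj by auto
  qed
qed (auto simp: rem_def)

lemma ins_rem:
  assumes s: "\<sigma> permutes {..<Suc m}" and k: "\<sigma> m = k"
  shows "ins m k (rem m k \<sigma>) = \<sigma>"
proof
  fix a
  have inj: "\<And>a b. \<sigma> a = \<sigma> b \<Longrightarrow> a = b" using permutes_inj[OF s] by (auto dest: injD)
  have ne: "\<And>a. a < m \<Longrightarrow> \<sigma> a \<noteq> k" using inj k by force
  have out: "\<And>a. a \<ge> Suc m \<Longrightarrow> \<sigma> a = a" using permutes_not_in[OF s] by auto
  show "ins m k (rem m k \<sigma>) a = \<sigma> a"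
    using ne[of a] out[of a] k by (auto simp: ins_def rem_def)
qed

lemma rem_ins:
  assumes t: "\<tau> permutes {..<m}" and k: "k \<le> m"
  shows "rem m k (ins m k \<tau>) = \<tau>"
proof
  fix a
  have out: "\<And>a. a \<ge> m \<Longrightarrow> \<tau> a = a" using permutes_not_in[OF t] by auto
  show "rem m k (ins m k \<tau>) a = \<tau> a"
    using out[of a] by (auto simp: ins_def rem_def)
qed

lemma del_facts:
  assumes "length w' = Suc m" "k \<le> m"
  shows "length (take k w' @ drop (Suc k) w') = m"
    "\<And>t. t < m \<Longrightarrow> (take k w' @ drop (Suc k) w') ! t = (if t < k then w' ! t else w' ! Suc t)"
  using assms by (auto simp: nth_append min_def)

lemma F_ins:
  fixes p :: "nat \<Rightarrow> nat \<Rightarrow> 'a::field"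
  assumes t: "\<tau> permutes {..<m}" and k: "k \<le> m" and lw: "length w = m"
  shows "(if length w' = Suc m \<and> (\<forall>a<Suc m. w' ! (ins m k \<tau> a) = (w @ [i]) ! a)
           then \<Prod>(a,b)\<in>Invs (Suc m) (ins m k \<tau>). p ((w @ [i]) ! a) ((w @ [i]) ! b) else 0)
       = (if length w' = Suc m \<and> w' ! k = i then (\<Prod>l\<in>{k<..m}. p (w' ! l) i) *
           (if length (take k w' @ drop (Suc k) w') = m \<and> (\<forall>a<m. (take k w' @ drop (Suc k) w') ! (\<tau> a) = w ! a)
            then \<Prod>(a,b)\<in>Invs m \<tau>. p (w ! a) (w ! b) else 0) else 0)"
proof (cases "length w' = Suc m")
  case False
  then show ?thesis by simp
next
  case L: True
  define d where "d = take k w' @ drop (Suc k) w'"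
  define \<sigma> where "\<sigma> = ins m k \<tau>"
  have lt: "\<And>a. a < m \<Longrightarrow> \<tau> a < m" using permutes_in_image[OF t] by auto
  have sm: "\<sigma> m = k" by (simp add: \<sigma>_def ins_def)
  have sa: "\<And>a. a < m \<Longrightarrow> \<sigma> a = (if \<tau> a < k then \<tau> a else Suc (\<tau> a))" by (simp add: \<sigma>_def ins_def)
  have dl: "length d = m" using del_facts[OF L k] by (simp add: d_def)
  have dn: "\<And>t. t < m \<Longrightarrow> d ! t = (if t < k then w' ! t else w' ! Suc t)" using del_facts[OF L k] by (simp add: d_def)
  have wi: "\<And>a. a < m \<Longrightarrow> (w @ [i]) ! a = w ! a" using lw by (simp add: nth_append)
  have wm: "(w @ [i]) ! m = i" using lw[symmetric] by simp
  have ds: "\<And>a. a < m \<Longrightarrow> w' ! (\<sigma> a) = d ! (\<tau> a)" using sa dn lt by auto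
  have cond: "(\<forall>a<Suc m. w' ! (\<sigma> a) = (w @ [i]) ! a) \<longleftrightarrow> (w' ! k = i \<and> (\<forall>a<m. d ! (\<tau> a) = w ! a))"
    using ds wi wm sm by (auto simp: less_Suc_eq)
  show ?thesis
  proof (cases "w' ! k = i \<and> (\<forall>a<m. d ! (\<tau> a) = w ! a)")
    case False
    then show ?thesis using cond L dl by (auto simp add: \<sigma>_def[symmetric] d_def[symmetric])
  next
    case C: True
    have invs: "Invs (Suc m) \<sigma> = Invs m \<tau> \<union> (\<lambda>a. (a, m)) ` {a. a < m \<and> k \<le> \<tau> a}"
    proof (rule set_eqI)
      fix x :: "nat \<times> nat"
      obtain a b where x: "x = (a, b)" by (cases x)
      show "x \<in> Invs (Suc m) \<sigma> \<longleftrightarrow> x \<in> Invs m \<tau> \<union> (\<lambda>a. (a, m)) ` {a. a < m \<and> k \<le> \<tau> a}"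
      proof (cases "b < m")
        case True
        then show ?thesis using x sa lt by (auto simp: Invs_def split: if_splits)
      next
        case False
        then show ?thesis using x sa lt sm by (auto simp: Invs_def less_Suc_eq split: if_splits)
      qed
    qed
    have disj: "Invs m \<tau> \<inter> (\<lambda>a. (a, m)) ` {a. a < m \<and> k \<le> \<tau> a} = {}"
      by (auto simp: Invs_def)
    have fin1: "finite (Invs m \<tau>)"
      by (rule finite_subset[of _ "{..<m} \<times> {..<m}"]) (auto simp: Invs_def)
    have p1: "(\<Prod>(a,b)\<in>Invs m \<tau>. p ((w @ [i]) ! a) ((w @ [i]) ! b)) = (\<Prod>(a,b)\<in>Invs m \<tau>. p (w ! a) (w ! b))"
      by (rule prod.cong) (auto simp: Invs_def wi)
    have p2: "(\<Prod>(a,b)\<in>(\<lambda>a. (a, m)) ` {a. a < m \<and> k \<le> \<tau> a}. p ((w @ [i]) ! a) ((w @ [i]) ! b))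
        = (\<Prod>a\<in>{a. a < m \<and> k \<le> \<tau> a}. p (w ! a) i)"
      by (subst prod.reindex) (auto simp: inj_on_def wi wm)
    have img: "(\<lambda>a. Suc (\<tau> a)) ` {a. a < m \<and> k \<le> \<tau> a} = {k<..m}"
    proof
      show "(\<lambda>a. Suc (\<tau> a)) ` {a. a < m \<and> k \<le> \<tau> a} \<subseteq> {k<..m}" using lt by (auto simp: Suc_le_eq)
      show "{k<..m} \<subseteq> (\<lambda>a. Suc (\<tau> a)) ` {a. a < m \<and> k \<le> \<tau> a}"
      proof
        fix l assume l: "l \<in> {k<..m}"
        then have "l - 1 \<in> \<tau> ` {..<m}" using permutes_image[OF t] by auto
        then obtain a where a: "a < m" "\<tau> a = l - 1" by auto
        then show "l \<in> (\<lambda>a. Suc (\<tau> a)) ` {a. a < m \<and> k \<le> \<tau> a}" using l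
          by (intro image_eqI[of _ _ a]) auto
      qed
    qed
    have injt: "inj_on (\<lambda>a. Suc (\<tau> a)) {a. a < m \<and> k \<le> \<tau> a}"
      using permutes_inj[OF t] by (auto simp: inj_on_def dest: injD)
    have p3: "(\<Prod>l\<in>{k<..m}. p (w' ! l) i) = (\<Prod>a\<in>{a. a < m \<and> k \<le> \<tau> a}. p (w ! a) i)"
    proof -
      have "(\<Prod>l\<in>{k<..m}. p (w' ! l) i) = (\<Prod>a\<in>{a. a < m \<and> k \<le> \<tau> a}. p (w' ! Suc (\<tau> a)) i)"
        unfolding img[symmetric] by (subst prod.reindex[OF injt]) simp
      also have "\<dots> = (\<Prod>a\<in>{a. a < m \<and> k \<le> \<tau> a}. p (w ! a) i)"
      proof (rule prod.cong)
        fix a assume "a \<in> {a. a < m \<and> k \<le> \<tau> a}"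
        then have "a < m" "k \<le> \<tau> a" by auto
        then have "w' ! Suc (\<tau> a) = d ! (\<tau> a)" using dn lt by auto
        also have "\<dots> = w ! a" using C \<open>a < m\<close> by auto
        finally show "p (w' ! Suc (\<tau> a)) i = p (w ! a) i" by simp
      qed simp
      finally show ?thesis .
    qed
    have "(\<Prod>(a,b)\<in>Invs (Suc m) \<sigma>. p ((w @ [i]) ! a) ((w @ [i]) ! b))
       = (\<Prod>(a,b)\<in>Invs m \<tau>. p (w ! a) (w ! b)) * (\<Prod>l\<in>{k<..m}. p (w' ! l) i)"
      unfolding invs by (subst prod.union_disjoint) (use fin1 disj p1 p2 p3 in auto)
    then show ?thesis using cond C L dl by (simp add: \<sigma>_def[symmetric] d_def[symmetric] mult.commute)
  qed
qed

lemma symc_alt: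
  "symc p w w' = (\<Sum>\<sigma>\<in>{\<sigma>. \<sigma> permutes {..<length w}}.
      if length w' = length w \<and> (\<forall>a<length w. w' ! (\<sigma> a) = w ! a)
      then \<Prod>(a,b)\<in>Invs (length w) \<sigma>. p (w ! a) (w ! b) else 0)"
  unfolding symc_def Invs_def by (rule refl)

lemma symc_snoc:
  fixes p :: "nat \<Rightarrow> nat \<Rightarrow> 'a::field"
  assumes lw: "length w = m"
  shows "symc p (w @ [i]) w' = (\<Sum>k\<le>m. if length w' = Suc m \<and> w' ! k = i
      then (\<Prod>l\<in>{k<..m}. p (w' ! l) i) * symc p w (take k w' @ drop (Suc k) w') else 0)"
proof -
  define F where "F \<sigma> = (if length w' = Suc m \<and> (\<forall>a<Suc m. w' ! (\<sigma> a) = (w @ [i]) ! a)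
           then \<Prod>(a,b)\<in>Invs (Suc m) \<sigma>. p ((w @ [i]) ! a) ((w @ [i]) ! b) else 0)" for \<sigma>
  have "symc p (w @ [i]) w' = sum F {\<sigma>. \<sigma> permutes {..<Suc m}}"
    unfolding symc_alt F_def using lw by (simp cong: if_cong)
  also have "\<dots> = (\<Sum>k\<le>m. sum F {\<sigma>. \<sigma> \<in> {\<sigma>. \<sigma> permutes {..<Suc m}} \<and> \<sigma> m = k})"
  proof (rule sum.group[symmetric])
    show "finite {\<sigma>. \<sigma> permutes {..<Suc m}}" by (rule finite_permutations) simp
    show "(\<lambda>\<sigma>. \<sigma> m) ` {\<sigma>. \<sigma> permutes {..<Suc m}} \<subseteq> {..m}"
    proof
      fix x assume "x \<in> (\<lambda>\<sigma>. \<sigma> m) ` {\<sigma>. \<sigma> permutes {..<Suc m}}"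
      then obtain \<sigma> where "\<sigma> permutes {..<Suc m}" "x = \<sigma> m" by auto
      then have "x \<in> {..<Suc m}" using permutes_in_image[of \<sigma> "{..<Suc m}" m] by simp
      then show "x \<in> {..m}" by auto
    qed
  qed simp
  also have "\<dots> = (\<Sum>k\<le>m. if length w' = Suc m \<and> w' ! k = i
      then (\<Prod>l\<in>{k<..m}. p (w' ! l) i) * symc p w (take k w' @ drop (Suc k) w') else 0)"
  proof (rule sum.cong[OF refl])
    fix k assume "k \<in> {..m}"
    then have k: "k \<le> m" by simp
    have "sum F {\<sigma>. \<sigma> \<in> {\<sigma>. \<sigma> permutes {..<Suc m}} \<and> \<sigma> m = k}
        = sum (\<lambda>\<tau>. F (ins m k \<tau>)) {\<tau>. \<tau> permutes {..<m}}"
    proof (rule sum.reindex_bij_witness[where i="ins m k" and j="rem m k"])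
      fix \<sigma> assume "\<sigma> \<in> {\<sigma>. \<sigma> \<in> {\<sigma>. \<sigma> permutes {..<Suc m}} \<and> \<sigma> m = k}"
      then have s: "\<sigma> permutes {..<Suc m}" "\<sigma> m = k" by auto
      show "ins m k (rem m k \<sigma>) = \<sigma>" by (rule ins_rem[OF s])
      show "rem m k \<sigma> \<in> {\<tau>. \<tau> permutes {..<m}}" using rem_perm[OF s] by simp
      show "F (ins m k (rem m k \<sigma>)) = F \<sigma>" using ins_rem[OF s] by simp
    next
      fix \<tau> assume "\<tau> \<in> {\<tau>. \<tau> permutes {..<m}}"
      then have t: "\<tau> permutes {..<m}" by simp
      show "rem m k (ins m k \<tau>) = \<tau>" by (rule rem_ins[OF t k])
      show "ins m k \<tau> \<in> {\<sigma>. \<sigma> \<in> {\<sigma>. \<sigma> permutes {..<Suc m}} \<and> \<sigma> m = k}"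
        using ins_perm[OF t k] by (simp add: ins_def)
    qed
    also have "\<dots> = (\<Sum>\<tau>\<in>{\<tau>. \<tau> permutes {..<m}}. if length w' = Suc m \<and> w' ! k = i then (\<Prod>l\<in>{k<..m}. p (w' ! l) i) *
           (if length (take k w' @ drop (Suc k) w') = m \<and> (\<forall>a<m. (take k w' @ drop (Suc k) w') ! (\<tau> a) = w ! a)
            then \<Prod>(a,b)\<in>Invs m \<tau>. p (w ! a) (w ! b) else 0) else 0)"
      unfolding F_def by (rule sum.cong[OF refl]) (rule F_ins[OF _ k lw], simp)
    also have "\<dots> = (if length w' = Suc m \<and> w' ! k = i
      then (\<Prod>l\<in>{k<..m}. p (w' ! l) i) * symc p w (take k w' @ drop (Suc k) w') else 0)"
      unfolding symc_alt lw by (cases "length w' = Suc m \<and> w' ! k = i") (auto simp add: sum_distrib_left)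
    finally show "sum F {\<sigma>. \<sigma> \<in> {\<sigma>. \<sigma> permutes {..<Suc m}} \<and> \<sigma> m = k} = (if length w' = Suc m \<and> w' ! k = i
      then (\<Prod>l\<in>{k<..m}. p (w' ! l) i) * symc p w (take k w' @ drop (Suc k) w') else 0)" .
  qed
  finally show ?thesis .
qed



definition revt :: "(nat list \<Rightarrow> 'a) \<Rightarrow> nat list \<Rightarrow> 'a" where
  "revt u = (\<lambda>w. u (rev w))"

lemma tmul_rev:
  fixes u v :: "nat list \<Rightarrow> 'a::field"
  shows "tmul u v y = tmul (revt v) (revt u) (rev y)"
proof -
  have "tmul (revt v) (revt u) (rev y) = (\<Sum>k\<le>length y. v (drop (length y - k) y) * u (take (length y - k) y))"
    by (simp add: tmul_def revt_def rev_take rev_drop)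
  also have "\<dots> = (\<Sum>k\<le>length y. u (take k y) * v (drop k y))"
    by (rule sum.reindex_bij_witness[where i="\<lambda>k. length y - k" and j="\<lambda>k. length y - k"]) (auto simp: mult.commute)
  finally show ?thesis by (simp add: tmul_def)
qed

lemma drop_eq_single:
  assumes "k \<le> length y"
  shows "drop k y = [i] \<longleftrightarrow> (y \<noteq> [] \<and> k = length y - 1 \<and> last y = i)"
proof
  assume d: "drop k y = [i]"
  then have "length (drop k y) = 1" by simp
  then have "length y - k = 1" by simp
  then have k: "k = length y - 1" "y \<noteq> []" using assms by auto
  have "last (drop k y) = last y" using k by (intro last_drop) auto
  then have "last y = i" using d by simp
  then show "y \<noteq> [] \<and> k = length y - 1 \<and> last y = i" using k by simp
next
  assume "y \<noteq> [] \<and> k = length y - 1 \<and> last y = i"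
  then show "drop k y = [i]"
    by (metis append_butlast_last_id append_eq_conv_conj length_butlast)
qed

lemma tmul_gen_right:
  fixes z :: "nat list \<Rightarrow> 'a::field"
  shows "tmul z (gen i) y = (if y \<noteq> [] \<and> last y = i then z (butlast y) else 0)"
proof -
  have "tmul z (gen i) y = (\<Sum>k\<le>length y. if k = length y - 1 then (if y \<noteq> [] \<and> last y = i then z (butlast y) else 0) else 0)"
    unfolding tmul_def
  proof (rule sum.cong[OF refl])
    fix k assume "k \<in> {..length y}"
    then have k: "k \<le> length y" by simp
    show "z (take k y) * gen i (drop k y) = (if k = length y - 1 then (if y \<noteq> [] \<and> last y = i then z (butlast y) else 0) else 0)"
      using drop_eq_single[OF k, of i] by (auto simp: gen_def butlast_conv_take)
  qed
  also have "\<dots> = (if y \<noteq> [] \<and> last y = i then z (butlast y) else 0)"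
    by (subst sum.delta) auto
  finally show ?thesis .
qed

lemma qsym_superset:
  fixes f :: "nat list \<Rightarrow> 'a::field"
  assumes "finite S" "{w. f w \<noteq> 0} \<subseteq> S"
  shows "qsym p f w' = (\<Sum>w\<in>S. f w * symc p w w')"
  unfolding qsym_def using assms by (intro sum.mono_neutral_left) auto

lemma tensor_fin: "tensor n u \<Longrightarrow> finite {w. u w \<noteq> 0}"
  by (simp add: tensor_def)

lemma tensor_comp: "tensor n u \<Longrightarrow> tensor n (comp m u)"
  unfolding tensor_def comp_def by (auto elim: finite_subset[rotated])

lemma tensor_add: "tensor n u \<Longrightarrow> tensor n v \<Longrightarrow> tensor n (tadd u v)"
proof -
  assume u: "tensor n u" and v: "tensor n v"
  have "{w. tadd u v w \<noteq> 0} \<subseteq> {w. u w \<noteq> 0} \<union> {w. v w \<noteq> 0}" by (auto simp: tadd_def)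
  moreover have "finite ({w. u w \<noteq> 0} \<union> {w. v w \<noteq> 0})" using u v by (simp add: tensor_def)
  ultimately have "finite {w. tadd u v w \<noteq> 0}" by (rule finite_subset)
  moreover have "\<forall>w. tadd u v w \<noteq> 0 \<longrightarrow> set w \<subseteq> {..<n}"
  proof (intro allI impI)
    fix w assume "tadd u v w \<noteq> 0"
    then have "u w \<noteq> 0 \<or> v w \<noteq> 0" by (auto simp: tadd_def)
    then show "set w \<subseteq> {..<n}" using u v by (auto simp: tensor_def)
  qed
  ultimately show ?thesis by (simp add: tensor_def)
qed

lemma tensor_smult: "tensor n u \<Longrightarrow> tensor n (tsmult c u)"
  unfolding tensor_def tsmult_def by (auto elim: finite_subset[rotated])

lemma tensor_zero: "tensor n (\<lambda>_. 0)"
  unfolding tensor_def by simp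

lemma comp_add: "comp m (tadd u v) = tadd (comp m u) (comp m v)"
  by (rule ext) (simp add: comp_def tadd_def)

lemma comp_smult: "comp m (tsmult c u) = tsmult c (comp m u)"
  by (rule ext) (simp add: comp_def tsmult_def)

lemma qsym_add:
  fixes u v :: "nat list \<Rightarrow> 'a::field"
  assumes "tensor n u" "tensor n v"
  shows "qsym p (tadd u v) = tadd (qsym p u) (qsym p v)"
proof
  fix w'
  let ?S = "{w. u w \<noteq> 0} \<union> {w. v w \<noteq> 0}"
  have f: "finite ?S" using assms by (simp add: tensor_def)
  have "qsym p (tadd u v) w' = (\<Sum>w\<in>?S. tadd u v w * symc p w w')"
    by (rule qsym_superset[OF f]) (auto simp: tadd_def)
  also have "\<dots> = (\<Sum>w\<in>?S. u w * symc p w w') + (\<Sum>w\<in>?S. v w * symc p w w')"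
    by (simp add: tadd_def sum.distrib distrib_right)
  also have "\<dots> = qsym p u w' + qsym p v w'"
    by (subst (1 2) qsym_superset[OF f]) auto
  finally show "qsym p (tadd u v) w' = tadd (qsym p u) (qsym p v) w'" by (simp add: tadd_def)
qed

lemma qsym_smult:
  fixes u :: "nat list \<Rightarrow> 'a::field"
  assumes "tensor n u"
  shows "qsym p (tsmult c u) = tsmult c (qsym p u)"
proof
  fix w'
  let ?S = "{w. u w \<noteq> 0}"
  have f: "finite ?S" using assms by (simp add: tensor_def)
  have "qsym p (tsmult c u) w' = (\<Sum>w\<in>?S. tsmult c u w * symc p w w')"
    by (rule qsym_superset[OF f]) (auto simp: tsmult_def)
  also have "\<dots> = c * (\<Sum>w\<in>?S. u w * symc p w w')"
    by (simp add: tsmult_def sum_distrib_left mult.assoc)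
  also have "\<dots> = c * qsym p u w'"
    by (subst qsym_superset[OF f]) auto
  finally show "qsym p (tsmult c u) w' = tsmult c (qsym p u) w'" by (simp add: tsmult_def)
qed

lemma ideal_iff:
  "u \<in> nichols_ideal n p \<longleftrightarrow> tensor n u \<and> (\<forall>w. length w < 2 \<longrightarrow> u w = 0) \<and> (\<forall>m\<ge>2. qsym p (comp m u) = (\<lambda>_. 0))"
  by (simp add: nichols_ideal_def)

lemma ideal_tensor: "u \<in> nichols_ideal n p \<Longrightarrow> tensor n u"
  by (simp add: nichols_ideal_def)

lemma ideal_short: "u \<in> nichols_ideal n p \<Longrightarrow> length w < 2 \<Longrightarrow> u w = 0"
  by (simp add: nichols_ideal_def)

lemma ideal_qsym: "u \<in> nichols_ideal n p \<Longrightarrow> qsym p (comp m u) = (\<lambda>_. 0)"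
proof (cases "m < 2")
  case True
  assume u: "u \<in> nichols_ideal n p"
  have "comp m u = (\<lambda>_. 0)" using ideal_short[OF u] True by (auto simp: comp_def)
  then show ?thesis by (simp add: qsym_def)
next
  case False
  assume u: "u \<in> nichols_ideal n p"
  then show ?thesis using False by (simp add: nichols_ideal_def)
qed

lemma ideal_zero: "(\<lambda>_. 0) \<in> nichols_ideal n p"
  by (simp add: nichols_ideal_def tensor_def comp_def qsym_def)

lemma ideal_add:
  fixes u v :: "nat list \<Rightarrow> 'a::field"
  assumes "u \<in> nichols_ideal n p" "v \<in> nichols_ideal n p"
  shows "tadd u v \<in> nichols_ideal n p"
  unfolding ideal_iff
proof (intro conjI allI impI)
  show "tensor n (tadd u v)" using assms by (intro tensor_add ideal_tensor)
next
  fix w :: "nat list" assume "length w < 2" then show "tadd u v w = 0" using ideal_short[OF assms(1)] ideal_short[OF assms(2)] by (simp add: tadd_def)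
next
  fix m :: nat
  show "qsym p (comp m (tadd u v)) = (\<lambda>_. 0)"
    unfolding comp_add
    by (subst qsym_add[where n=n]) (auto intro!: tensor_comp ideal_tensor[OF assms(1)] ideal_tensor[OF assms(2)] simp: ideal_qsym[OF assms(1)] ideal_qsym[OF assms(2)] tadd_def)
qed

lemma ideal_smult:
  fixes u :: "nat list \<Rightarrow> 'a::field"
  assumes "u \<in> nichols_ideal n p"
  shows "tsmult c u \<in> nichols_ideal n p"
  unfolding ideal_iff
proof (intro conjI allI impI)
  show "tensor n (tsmult c u)" using assms by (intro tensor_smult ideal_tensor)
next
  fix w :: "nat list" assume "length w < 2" then show "tsmult c u w = 0" using ideal_short[OF assms(1)] by (simp add: tsmult_def)
next
  fix m :: nat
  show "qsym p (comp m (tsmult c u)) = (\<lambda>_. 0)"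
    unfolding comp_smult
    by (subst qsym_smult[where n=n]) (auto intro!: tensor_comp ideal_tensor[OF assms(1)] simp: ideal_qsym[OF assms(1)] tsmult_def)
qed

lemma ideal_diff:
  fixes u v :: "nat list \<Rightarrow> 'a::field"
  assumes "u \<in> nichols_ideal n p" "v \<in> nichols_ideal n p"
  shows "tdiff u v \<in> nichols_ideal n p"
proof -
  have "tdiff u v = tadd u (tsmult (-1) v)" by (auto simp: tdiff_def tadd_def tsmult_def)
  then show ?thesis using assms by (simp add: ideal_add ideal_smult)
qed

lemma ideal_sum:
  fixes f :: "'b \<Rightarrow> nat list \<Rightarrow> 'a::field"
  assumes "finite A" "\<And>a. a \<in> A \<Longrightarrow> f a \<in> nichols_ideal n p"
  shows "(\<lambda>w. \<Sum>a\<in>A. f a w) \<in> nichols_ideal n p"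
  using assms
proof (induction A rule: finite_induct)
  case empty
  then show ?case using ideal_zero by simp
next
  case (insert a A)
  have "(\<lambda>w. \<Sum>a\<in>insert a A. f a w) = tadd (f a) (\<lambda>w. \<Sum>a\<in>A. f a w)"
    using insert by (auto simp: tadd_def)
  then show ?case using insert by (simp add: ideal_add)
qed



lemma comp_mul_gen:
  fixes z :: "nat list \<Rightarrow> 'a::field"
  shows "comp (Suc m) (tmul z (gen i)) = tmul (comp m z) (gen i)"
  by (rule ext) (auto simp: comp_def tmul_gen_right)

lemma qsym_mul_gen:
  fixes z :: "nat list \<Rightarrow> 'a::field"
  assumes fz: "finite {w. z w \<noteq> 0}" and lz: "\<And>w. z w \<noteq> 0 \<Longrightarrow> length w = m"
    and q: "qsym p z = (\<lambda>_. 0)"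
  shows "qsym p (tmul z (gen i)) = (\<lambda>_. 0)"
proof
  fix w'
  let ?S = "{w. z w \<noteq> 0}"
  let ?C = "\<lambda>k. length w' = Suc m \<and> w' ! k = i"
  let ?c = "\<lambda>k. \<Prod>l\<in>{k<..m}. p (w' ! l) i"
  let ?d = "\<lambda>k. take k w' @ drop (Suc k) w'"
  have sub: "{w. tmul z (gen i) w \<noteq> 0} \<subseteq> (\<lambda>x. x @ [i]) ` ?S"
  proof
    fix y assume "y \<in> {w. tmul z (gen i) w \<noteq> 0}"
    then have "y \<noteq> []" "last y = i" "z (butlast y) \<noteq> 0" by (auto simp: tmul_gen_right split: if_splits)
    then show "y \<in> (\<lambda>x. x @ [i]) ` ?S" by (intro image_eqI[of _ _ "butlast y"]) auto
  qed
  have "qsym p (tmul z (gen i)) w' = (\<Sum>y\<in>(\<lambda>x. x @ [i]) ` ?S. tmul z (gen i) y * symc p y w')"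
    by (rule qsym_superset[OF finite_imageI[OF fz] sub])
  also have "\<dots> = (\<Sum>x\<in>?S. z x * symc p (x @ [i]) w')"
    by (subst sum.reindex) (auto simp: inj_on_def tmul_gen_right)
  also have "\<dots> = (\<Sum>x\<in>?S. z x * (\<Sum>k\<le>m. (if ?C k then ?c k else 0) * symc p x (?d k)))"
  proof (rule sum.cong[OF refl])
    fix x assume "x \<in> ?S"
    then have "length x = m" using lz by auto
    then show "z x * symc p (x @ [i]) w' = z x * (\<Sum>k\<le>m. (if ?C k then ?c k else 0) * symc p x (?d k))"
      by (subst symc_snoc) (auto intro!: sum.cong)
  qed
  also have "\<dots> = (\<Sum>k\<le>m. (if ?C k then ?c k else 0) * (\<Sum>x\<in>?S. z x * symc p x (?d k)))"
    by (simp add: sum_distrib_left sum_distrib_right mult_ac sum.swap[of _ ?S])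
  also have "\<dots> = (\<Sum>k\<le>m. (if ?C k then ?c k else 0) * qsym p z (?d k))"
    by (simp add: qsym_def)
  also have "\<dots> = 0" using q by simp
  finally show "qsym p (tmul z (gen i)) w' = 0" .
qed

lemma ideal_mul_gen:
  fixes z :: "nat list \<Rightarrow> 'a::field"
  assumes z: "z \<in> nichols_ideal n p" and i: "i < n"
  shows "tmul z (gen i) \<in> nichols_ideal n p"
  unfolding ideal_iff
proof (intro conjI allI impI)
  note tz = ideal_tensor[OF z]
  have sub: "{w. tmul z (gen i) w \<noteq> 0} \<subseteq> (\<lambda>x. x @ [i]) ` {w. z w \<noteq> 0}"
  proof
    fix y assume "y \<in> {w. tmul z (gen i) w \<noteq> 0}"
    then have "y \<noteq> []" "last y = i" "z (butlast y) \<noteq> 0" by (auto simp: tmul_gen_right split: if_splits)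
    then show "y \<in> (\<lambda>x. x @ [i]) ` {w. z w \<noteq> 0}" by (intro image_eqI[of _ _ "butlast y"]) auto
  qed
  show "tensor n (tmul z (gen i))"
    unfolding tensor_def
  proof (intro conjI allI impI)
    show "finite {w. tmul z (gen i) w \<noteq> 0}"
      by (rule finite_subset[OF sub]) (use tz in \<open>simp add: tensor_def\<close>)
    fix w assume "tmul z (gen i) w \<noteq> 0"
    then have "w \<noteq> []" "last w = i" "z (butlast w) \<noteq> 0" by (auto simp: tmul_gen_right split: if_splits)
    then have "set (butlast w) \<subseteq> {..<n}" using tz by (auto simp: tensor_def)
    moreover have "w = butlast w @ [i]" using \<open>w \<noteq> []\<close> \<open>last w = i\<close> by (metis append_butlast_last_id)
    ultimately show "set w \<subseteq> {..<n}" using i by (metis Un_least empty_subsetI insert_subset lessThan_iff set_append set_simps(2) set_simps(1))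
  qed
next
    fix w :: "nat list" assume "length w < 2"
    then show "tmul z (gen i) w = 0" using ideal_short[OF z, of "butlast w"] by (auto simp: tmul_gen_right)
next
    fix m :: nat assume m: "2 \<le> m"
    then obtain m' where m': "m = Suc m'" by (cases m) auto
    have "qsym p (tmul (comp m' z) (gen i)) = (\<lambda>_. 0)"
    proof (rule qsym_mul_gen)
      show "finite {w. comp m' z w \<noteq> 0}" using tensor_comp[OF ideal_tensor[OF z]] by (simp add: tensor_def)
      show "\<And>w. comp m' z w \<noteq> 0 \<Longrightarrow> length w = m'" by (auto simp: comp_def split: if_splits)
      show "qsym p (comp m' z) = (\<lambda>_. 0)" by (rule ideal_qsym[OF z])
    qed
    then show "qsym p (comp m (tmul z (gen i))) = (\<lambda>_. 0)" by (simp add: m' comp_mul_gen)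
qed

definition rsh :: "(nat list \<Rightarrow> 'a::field) \<Rightarrow> nat list \<Rightarrow> nat list \<Rightarrow> 'a" where
  "rsh z w = (\<lambda>y. if (\<exists>x. y = x @ w) then z (take (length y - length w) y) else 0)"

lemma rsh_Nil: "rsh z [] = z"
  by (rule ext) (simp add: rsh_def)

lemma rsh_Cons: "rsh z (i # w) = rsh (tmul z (gen i)) w"
proof
  fix y
  show "rsh z (i # w) y = rsh (tmul z (gen i)) w y"
  proof (cases "\<exists>x. y = x @ i # w")
    case True
    then obtain x where x: "y = x @ i # w" by auto
    have "take (length y - length w) y = x @ [i]" using x by simp
    then show ?thesis using x by (auto simp: rsh_def tmul_gen_right)
  next
    case False
    show ?thesis
    proof (cases "\<exists>x. y = x @ w")
      case True
      then obtain x where x: "y = x @ w" by auto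
      have tk: "take (length y - length w) y = x" using x by simp
      have "\<not> (x \<noteq> [] \<and> last x = i)"
      proof
        assume "x \<noteq> [] \<and> last x = i"
        then have "y = butlast x @ i # w" using x by (metis append_butlast_last_id append_eq_append_conv2 append_self_conv2 append.assoc append_Cons append_Nil)
        then show False using False by blast
      qed
      then show ?thesis using False x tk by (auto simp: rsh_def tmul_gen_right)
    next
      case F2: False
      then show ?thesis using False by (auto simp: rsh_def)
    qed
  qed
qed

lemma rsh_ideal:
  fixes z :: "nat list \<Rightarrow> 'a::field"
  assumes "z \<in> nichols_ideal n p" "set w \<subseteq> {..<n}"
  shows "rsh z w \<in> nichols_ideal n p"
  using assms
proof (induction w arbitrary: z)
  case Nil
  then show ?case by (simp add: rsh_Nil)
next
  case (Cons i w)
  then show ?case by (simp add: rsh_Cons ideal_mul_gen)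
qed

lemma tmul_decomp:
  fixes z v :: "nat list \<Rightarrow> 'a::field"
  assumes fv: "finite {w. v w \<noteq> 0}"
  shows "tmul z v y = (\<Sum>w\<in>{w. v w \<noteq> 0}. v w * rsh z w y)"
proof -
  let ?S = "{w. v w \<noteq> 0}"
  let ?D = "(\<lambda>k. drop k y) ` {..length y}"
  let ?g = "\<lambda>w. z (take (length y - length w) y) * v w"
  have injd: "inj_on (\<lambda>k. drop k y) {..length y}"
  proof (rule inj_onI)
    fix a b assume "a \<in> {..length y}" "b \<in> {..length y}" "drop a y = drop b y"
    then have "length (drop a y) = length (drop b y)" by simp
    then show "a = b" using \<open>a \<in> _\<close> \<open>b \<in> _\<close> by auto
  qed
  have "tmul z v y = (\<Sum>k\<le>length y. ?g (drop k y))"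
    unfolding tmul_def by (rule sum.cong) (auto simp: min_def)
  also have "\<dots> = sum ?g ?D" by (simp add: sum.reindex[OF injd])
  also have "\<dots> = sum ?g (?D \<inter> ?S)" by (rule sum.mono_neutral_right) auto
  also have "\<dots> = (\<Sum>w\<in>?S. v w * rsh z w y)"
  proof (rule sum.mono_neutral_cong_left)
    show "finite ?S" by (rule fv)
    show "?D \<inter> ?S \<subseteq> ?S" by auto
    show "\<forall>w\<in>?S - ?D \<inter> ?S. v w * rsh z w y = 0"
    proof
      fix w assume w: "w \<in> ?S - ?D \<inter> ?S"
      have "\<not> (\<exists>x. y = x @ w)"
      proof
        assume "\<exists>x. y = x @ w"
        then obtain x where "y = x @ w" by auto
        then have "w = drop (length x) y" "length x \<le> length y" by auto
        then show False using w by auto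
      qed
      then show "v w * rsh z w y = 0" by (simp add: rsh_def)
    qed
    show "\<And>w. w \<in> ?D \<inter> ?S \<Longrightarrow> ?g w = v w * rsh z w y"
    proof -
      fix w assume "w \<in> ?D \<inter> ?S"
      then obtain k where k: "k \<le> length y" "w = drop k y" by auto
      then have "y = take k y @ w" by simp
      then show "?g w = v w * rsh z w y" unfolding rsh_def by (metis (mono_tags) mult.commute)
    qed
  qed
  finally show ?thesis .
qed

lemma right_ideal:
  fixes z v :: "nat list \<Rightarrow> 'a::field"
  assumes z: "z \<in> nichols_ideal n p" and v: "tensor n v"
  shows "tmul z v \<in> nichols_ideal n p"
proof -
  have fv: "finite {w. v w \<noteq> 0}" using v by (simp add: tensor_def)
  have "tmul z v = (\<lambda>y. \<Sum>w\<in>{w. v w \<noteq> 0}. tsmult (v w) (rsh z w) y)"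
    by (rule ext) (simp add: tmul_decomp[OF fv] tsmult_def)
  also have "\<dots> \<in> nichols_ideal n p"
  proof (rule ideal_sum[OF fv])
    fix w assume "w \<in> {w. v w \<noteq> 0}"
    then have "set w \<subseteq> {..<n}" using v by (auto simp: tensor_def)
    then show "tsmult (v w) (rsh z w) \<in> nichols_ideal n p" by (intro ideal_smult rsh_ideal z)
  qed
  finally show ?thesis .
qed



definition rr :: "nat \<Rightarrow> nat \<Rightarrow> nat" where
  "rr m a = (if a < m then m - Suc a else a)"

lemma rr_rr [simp]: "rr m (rr m a) = a"
  by (simp add: rr_def)

lemma rr_lt: "a < m \<Longrightarrow> rr m a < m"
  by (simp add: rr_def)

lemma rr_perm: "rr m permutes {..<m}"
proof (rule perm_intro)
  show "inj_on (rr m) {..<m}" by (metis inj_onI rr_rr)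
qed (auto simp: rr_def)

lemma rr_less_iff: "a < m \<Longrightarrow> b < m \<Longrightarrow> rr m a < rr m b \<longleftrightarrow> b < a"
  unfolding rr_def by simp arith

lemma symc_rev:
  fixes q :: "nat \<Rightarrow> nat \<Rightarrow> 'a::field"
  shows "symc q (rev u) w' = symc (\<lambda>a b. q b a) u (rev w')"
proof -
  define m where "m = length u"
  define r where "r = rr m"
  define g where "g \<tau> = (if length (rev w') = m \<and> (\<forall>a<m. rev w' ! (\<tau> a) = u ! a)
      then \<Prod>(a,b)\<in>Invs m \<tau>. q (u ! b) (u ! a) else 0)" for \<tau>
  define h where "h \<sigma> = (if length w' = m \<and> (\<forall>a<m. w' ! (\<sigma> a) = rev u ! a)
      then \<Prod>(a,b)\<in>Invs m \<sigma>. q (rev u ! a) (rev u ! b) else 0)" for \<sigma>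
  have rp: "r permutes {..<m}" by (simp add: r_def rr_perm)
  have rlt: "\<And>a. a < m \<Longrightarrow> r a < m" by (simp add: r_def rr_lt)
  have rrr: "\<And>a. r (r a) = a" by (simp add: r_def)
  have key: "h (r \<circ> \<tau> \<circ> r) = g \<tau>" if t: "\<tau> permutes {..<m}" for \<tau>
  proof (cases "length w' = m")
    case False
    then show ?thesis by (simp add: h_def g_def)
  next
    case L: True
    have tlt: "\<And>a. a < m \<Longrightarrow> \<tau> a < m" using permutes_in_image[OF t] by auto
    have ru: "\<And>a. a < m \<Longrightarrow> rev u ! a = u ! (r a)" by (simp add: rev_nth m_def r_def rr_def)
    have rw: "\<And>a. a < m \<Longrightarrow> rev w' ! (\<tau> a) = w' ! (r (\<tau> a))" using tlt L by (simp add: rev_nth r_def rr_def)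
    have cond: "(\<forall>a<m. w' ! ((r \<circ> \<tau> \<circ> r) a) = rev u ! a) \<longleftrightarrow> (\<forall>a<m. rev w' ! (\<tau> a) = u ! a)"
    proof
      assume A: "\<forall>a<m. w' ! ((r \<circ> \<tau> \<circ> r) a) = rev u ! a"
      show "\<forall>a<m. rev w' ! (\<tau> a) = u ! a"
      proof (intro allI impI)
        fix c assume c: "c < m"
        have "w' ! ((r \<circ> \<tau> \<circ> r) (r c)) = rev u ! (r c)" using A rlt[OF c] by blast
        then show "rev w' ! (\<tau> c) = u ! c" using rw[OF c] ru[OF rlt[OF c]] rrr by simp
      qed
    next
      assume A: "\<forall>a<m. rev w' ! (\<tau> a) = u ! a"
      show "\<forall>a<m. w' ! ((r \<circ> \<tau> \<circ> r) a) = rev u ! a"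
      proof (intro allI impI)
        fix a assume a: "a < m"
        have "rev w' ! (\<tau> (r a)) = u ! (r a)" using A rlt[OF a] by blast
        then show "w' ! ((r \<circ> \<tau> \<circ> r) a) = rev u ! a" using rw[OF rlt[OF a]] ru[OF a] by simp
      qed
    qed
    have inv_iff: "(a, b) \<in> Invs m (r \<circ> \<tau> \<circ> r) \<longleftrightarrow> (r b, r a) \<in> Invs m \<tau>" for a b
    proof
      assume "(a, b) \<in> Invs m (r \<circ> \<tau> \<circ> r)"
      then have ab: "a < b" "b < m" "r (\<tau> (r b)) < r (\<tau> (r a))" by (auto simp: Invs_def)
      have am: "a < m" using ab by simp
      have "\<tau> (r a) < \<tau> (r b)" using ab(3) tlt[OF rlt[OF am]] tlt[OF rlt[OF ab(2)]] by (simp add: r_def rr_less_iff)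
      moreover have "r b < r a" using rr_less_iff[of b m a] ab(1,2) am by (simp add: r_def)
      ultimately show "(r b, r a) \<in> Invs m \<tau>" using rlt[OF am] by (auto simp: Invs_def)
    next
      assume "(r b, r a) \<in> Invs m \<tau>"
      then have ab: "r b < r a" "r a < m" "\<tau> (r a) < \<tau> (r b)" by (auto simp: Invs_def)
      have am: "a < m" using ab(2) by (metis not_less rr_def r_def rrr)
      have bm: "b < m" using ab(1) ab(2) am by (metis not_less rr_def r_def rrr order.strict_trans)
      have "a < b" using ab(1) am bm by (simp add: r_def rr_less_iff)
      moreover have "r (\<tau> (r b)) < r (\<tau> (r a))" using ab(3) tlt[OF rlt[OF am]] tlt[OF rlt[OF bm]] by (simp add: r_def rr_less_iff)
      ultimately show "(a, b) \<in> Invs m (r \<circ> \<tau> \<circ> r)" using bm by (auto simp: Invs_def)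
    qed
    have prodeq: "(\<Prod>(a,b)\<in>Invs m (r \<circ> \<tau> \<circ> r). q (rev u ! a) (rev u ! b)) = (\<Prod>(a,b)\<in>Invs m \<tau>. q (u ! b) (u ! a))"
    proof (rule prod.reindex_bij_witness[where i="\<lambda>(c,d). (r d, r c)" and j="\<lambda>(a,b). (r b, r a)"])
      fix x assume x: "x \<in> Invs m (r \<circ> \<tau> \<circ> r)"
      obtain a b where xab: "x = (a, b)" by (cases x)
      show "(case case x of (a, b) \<Rightarrow> (r b, r a) of (c, d) \<Rightarrow> (r d, r c)) = x" using xab rrr by simp
      show "(case x of (a, b) \<Rightarrow> (r b, r a)) \<in> Invs m \<tau>" using x xab inv_iff by simp
      have abm: "a < m" "b < m" using x xab by (auto simp: Invs_def)
      show "(case case x of (a, b) \<Rightarrow> (r b, r a) of (a, b) \<Rightarrow> q (u ! b) (u ! a)) = (case x of (a, b) \<Rightarrow> q (rev u ! a) (rev u ! b))"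
        using xab ru abm by simp
    next
      fix y assume y: "y \<in> Invs m \<tau>"
      obtain c d where ycd: "y = (c, d)" by (cases y)
      show "(case case y of (c, d) \<Rightarrow> (r d, r c) of (a, b) \<Rightarrow> (r b, r a)) = y" using ycd rrr by simp
      show "(case y of (c, d) \<Rightarrow> (r d, r c)) \<in> Invs m (r \<circ> \<tau> \<circ> r)" using y ycd inv_iff[of "r d" "r c"] rrr by simp
    qed
    show ?thesis unfolding h_def g_def using cond prodeq L by auto
  qed
  have "symc (\<lambda>a b. q b a) u (rev w') = sum g {\<tau>. \<tau> permutes {..<m}}"
    unfolding symc_alt g_def m_def by simp
  also have "\<dots> = sum h {\<sigma>. \<sigma> permutes {..<m}}"
  proof (rule sum.reindex_bij_witness[where j="\<lambda>\<tau>. r \<circ> \<tau> \<circ> r" and i="\<lambda>\<sigma>. r \<circ> \<sigma> \<circ> r"])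
    fix \<tau> assume "\<tau> \<in> {\<tau>. \<tau> permutes {..<m}}"
    then have t: "\<tau> permutes {..<m}" by simp
    show "r \<circ> (r \<circ> \<tau> \<circ> r) \<circ> r = \<tau>" by (rule ext) (simp add: rrr)
    show "r \<circ> \<tau> \<circ> r \<in> {\<sigma>. \<sigma> permutes {..<m}}" using t rp by (simp add: permutes_compose)
    show "h (r \<circ> \<tau> \<circ> r) = g \<tau>" by (rule key[OF t])
  next
    fix \<sigma> assume "\<sigma> \<in> {\<sigma>. \<sigma> permutes {..<m}}"
    then have s: "\<sigma> permutes {..<m}" by simp
    show "r \<circ> (r \<circ> \<sigma> \<circ> r) \<circ> r = \<sigma>" by (rule ext) (simp add: rrr)
    show "r \<circ> \<sigma> \<circ> r \<in> {\<tau>. \<tau> permutes {..<m}}" using s rp by (simp add: permutes_compose)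
  qed
  also have "\<dots> = symc q (rev u) w'"
    unfolding symc_alt h_def m_def by (simp cong: if_cong)
  finally show ?thesis by simp
qed

lemma revt_revt [simp]: "revt (revt z) = z"
  by (simp add: revt_def)

lemma supp_revt: "{w. revt z w \<noteq> 0} = rev ` {w. z w \<noteq> 0}"
  by (auto simp: revt_def image_iff) (metis rev_rev_ident)

lemma tensor_revt: "tensor n z \<Longrightarrow> tensor n (revt z)"
proof -
  assume t: "tensor n z"
  have "finite {w. revt z w \<noteq> 0}" using t by (simp add: supp_revt tensor_def)
  moreover have "\<forall>w. revt z w \<noteq> 0 \<longrightarrow> set w \<subseteq> {..<n}"
  proof (intro allI impI)
    fix w assume "revt z w \<noteq> 0"
    then have "z (rev w) \<noteq> 0" by (simp add: revt_def)
    then have "set (rev w) \<subseteq> {..<n}" using t unfolding tensor_def by blast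
    then show "set w \<subseteq> {..<n}" by simp
  qed
  ultimately show ?thesis by (simp add: tensor_def)
qed

lemma comp_revt: "comp m (revt z) = revt (comp m z)"
  by (rule ext) (simp add: comp_def revt_def)

lemma qsym_revt:
  fixes f :: "nat list \<Rightarrow> 'a::field"
  assumes "finite {w. f w \<noteq> 0}"
  shows "qsym q (revt f) w' = qsym (\<lambda>a b. q b a) f (rev w')"
proof -
  have "qsym q (revt f) w' = (\<Sum>w\<in>rev ` {w. f w \<noteq> 0}. revt f w * symc q w w')"
    unfolding qsym_def supp_revt ..
  also have "\<dots> = (\<Sum>x\<in>{w. f w \<noteq> 0}. f x * symc q (rev x) w')"
    by (subst sum.reindex) (auto simp: revt_def)
  also have "\<dots> = qsym (\<lambda>a b. q b a) f (rev w')"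
    by (simp add: qsym_def symc_rev)
  finally show ?thesis .
qed

lemma revt_ideal:
  fixes z :: "nat list \<Rightarrow> 'a::field"
  assumes z: "z \<in> nichols_ideal n p"
  shows "revt z \<in> nichols_ideal n (\<lambda>a b. p b a)"
  unfolding ideal_iff
proof (intro conjI allI impI)
  show "tensor n (revt z)" by (rule tensor_revt[OF ideal_tensor[OF z]])
next
  fix w :: "nat list" assume "length w < 2"
  then show "revt z w = 0" using ideal_short[OF z, of "rev w"] by (simp add: revt_def)
next
  fix m :: nat assume "2 \<le> m"
  have f: "finite {w. comp m z w \<noteq> 0}" using tensor_comp[OF ideal_tensor[OF z]] by (simp add: tensor_def)
  show "qsym (\<lambda>a b. p b a) (comp m (revt z)) = (\<lambda>_. 0)"
    unfolding comp_revt by (rule ext) (simp add: qsym_revt[OF f] ideal_qsym[OF z])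
qed

lemma left_ideal:
  fixes z v :: "nat list \<Rightarrow> 'a::field"
  assumes z: "z \<in> nichols_ideal n p" and v: "tensor n v"
  shows "tmul v z \<in> nichols_ideal n p"
proof -
  have e: "tmul v z = revt (tmul (revt z) (revt v))"
    by (rule ext) (simp add: revt_def tmul_rev[of v z])
  have "tmul (revt z) (revt v) \<in> nichols_ideal n (\<lambda>a b. p b a)"
    by (rule right_ideal[OF revt_ideal[OF z] tensor_revt[OF v]])
  from revt_ideal[OF this] show ?thesis unfolding e by simp
qed



definition ed :: "nat \<Rightarrow> nat \<Rightarrow> nat" where
  "ed i = (\<lambda>k. if k = i then 1 else 0)"

lemma count_single: "count_list [i] k = ed i k"
  by (simp add: ed_def)

lemma homog_single:
  assumes "homog n \<alpha> u" "u [i] \<noteq> 0"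
  shows "\<alpha> = ed i"
proof
  fix k
  have "count_list [i] k = \<alpha> k" using assms unfolding homog_def by blast
  then show "\<alpha> k = ed i k" by (auto simp: ed_def split: if_splits)
qed

lemma count_zero_nil:
  assumes "\<forall>k. count_list w k = 0" shows "w = []"
proof (cases w)
  case Nil
  then show ?thesis .
next
  case (Cons x w')
  then have "count_list w x = count_list w' x + 1" by simp
  then show ?thesis using assms by simp
qed

lemma count_ed_single:
  assumes "\<forall>k. count_list w k = ed i k"
  shows "w = [i]"
proof (cases w)
  case Nil
  then show ?thesis using assms[rule_format, of i] by (simp add: ed_def)
next
  case (Cons x w')
  have "count_list w x > 0" using Cons by simp
  then have xi: "x = i" using assms[rule_format, of x] by (simp add: ed_def split: if_splits)
  have "\<forall>k. count_list w' k = 0"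
  proof
    fix k
    show "count_list w' k = 0" using assms[rule_format, of k] Cons xi by (simp add: ed_def split: if_splits)
  qed
  then show ?thesis using Cons xi count_zero_nil by simp
qed

lemma homog_ed_word:
  assumes "homog n (ed i) u" "u w \<noteq> 0"
  shows "w = [i]"
  using assms count_ed_single by (simp add: homog_def)

lemma gen_homog:
  assumes "i < n"
  shows "homog n (ed i) (gen i :: nat list \<Rightarrow> 'a::field)"
proof -
  have s: "{w. (gen i w :: 'a) \<noteq> 0} = {[i]}" by (auto simp: gen_def)
  have "tensor n (gen i :: nat list \<Rightarrow> 'a)" unfolding tensor_def s using assms by (simp add: gen_def)
  moreover have "\<forall>w. (gen i w :: 'a) \<noteq> 0 \<longrightarrow> (\<forall>k. count_list w k = ed i k)"
    by (simp add: gen_def ed_def)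
  ultimately show ?thesis by (simp add: homog_def)
qed

lemma pchar_ed:
  fixes p :: "nat \<Rightarrow> nat \<Rightarrow> 'a::field"
  assumes "i < n" "j < n"
  shows "pchar n p (ed i) (ed j) = p i j"
proof -
  have "pchar n p (ed i) (ed j) = (\<Prod>a<n. if a = i then p i j else 1)"
    unfolding pchar_def
  proof (rule prod.cong[OF refl])
    fix a assume "a \<in> {..<n}"
    show "(\<Prod>b<n. p a b ^ (ed i a * ed j b)) = (if a = i then p i j else 1)"
    proof (cases "a = i")
      case True
      have "(\<Prod>b<n. p a b ^ (ed i a * ed j b)) = (\<Prod>b<n. if b = j then p a b else 1)"
        using True by (intro prod.cong) (auto simp: ed_def)
      also have "\<dots> = p a j" using assms by (simp add: prod.delta)
      finally show ?thesis using True by simp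
    next
      case False
      then show ?thesis by (simp add: ed_def)
    qed
  qed
  also have "\<dots> = p i j" using assms by (simp add: prod.delta)
  finally show ?thesis .
qed

lemma tmul_gen_gen:
  "tmul (gen i) (gen j) w = (if w = [i, j] then (1::'a::field) else 0)"
proof -
  have "(w \<noteq> [] \<and> last w = j \<and> butlast w = [i]) \<longleftrightarrow> w = [i, j]"
  proof
    assume H: "w \<noteq> [] \<and> last w = j \<and> butlast w = [i]"
    have "w = butlast w @ [last w]" using H by (intro append_butlast_last_id[symmetric]) simp
    also have "\<dots> = [i, j]" using H by simp
    finally show "w = [i, j]" .
  qed simp
  moreover have "tmul (gen i) (gen j) w = (if w \<noteq> [] \<and> last w = j then gen i (butlast w) else (0::'a))"
    by (rule tmul_gen_right)
  ultimately show ?thesis by (auto simp: gen_def)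
qed

lemma tmul_len2:
  fixes u v :: "nat list \<Rightarrow> 'a::field"
  assumes "u [] = 0" "v [] = 0"
  shows "tmul u v [a, b] = u [a] * v [b]"
proof -
  have "tmul u v [a, b] = (\<Sum>k\<in>{0,1,2}. u (take k [a,b]) * v (drop k [a,b]))"
    unfolding tmul_def by (rule sum.cong) auto
  also have "\<dots> = u [a] * v [b]" using assms by simp
  finally show ?thesis .
qed

lemma tmul_nil:
  fixes u v :: "nat list \<Rightarrow> 'a::field"
  shows "tmul u v [] = u [] * v []"
  by (simp add: tmul_def)

definition brf :: "((nat \<Rightarrow> nat) \<Rightarrow> (nat \<Rightarrow> nat) \<Rightarrow> 'a) \<Rightarrow> ((nat \<Rightarrow> nat) \<Rightarrow> (nat \<Rightarrow> nat) \<Rightarrow> 'a)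
   \<Rightarrow> (nat \<Rightarrow> nat) \<Rightarrow> (nat \<Rightarrow> nat) \<Rightarrow> (nat list \<Rightarrow> 'a::field) \<Rightarrow> (nat list \<Rightarrow> 'a) \<Rightarrow> nat list \<Rightarrow> 'a" where
  "brf A B = (\<lambda>\<alpha> \<beta> u v. tdiff (tsmult (A \<alpha> \<beta>) (tmul u v)) (tsmult (B \<alpha> \<beta>) (tmul v u)))"

lemma braided_brf: "braided_br n p = brf (\<lambda>_ _. 1) (pchar n p)"
  unfolding braided_br_def brf_def by (intro ext) (simp add: tsmult_def tdiff_def)

lemma L_brf: "L_br n p = brf (\<lambda>\<alpha> \<beta>. pchar n p \<beta> \<alpha>) (pchar n p)"
  unfolding L_br_def brf_def by (intro ext) (simp add: tsmult_def tdiff_def)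

lemma comm_brf: "(comm_br :: _ \<Rightarrow> _ \<Rightarrow> _ \<Rightarrow> _ \<Rightarrow> nat list \<Rightarrow> 'a::field) = brf (\<lambda>_ _. 1) (\<lambda>_ _. 1)"
  unfolding comm_br_def brf_def by (intro ext) (simp add: tsmult_def tdiff_def)

lemma brf_apply: "brf A B \<alpha> \<beta> u v w = A \<alpha> \<beta> * tmul u v w - B \<alpha> \<beta> * tmul v u w"
  by (simp add: brf_def tdiff_def tsmult_def)

lemma closure_nil:
  fixes p :: "nat \<Rightarrow> nat \<Rightarrow> 'a::field"
  assumes "u \<in> closure_br n p (brf A B)"
  shows "u [] = 0"
  using assms
proof induction
  case (gen_in v)
  then show ?case by (auto simp: Vsp_def gen_def)
next
  case (ideal_in u)
  show ?case by (rule ideal_short[OF ideal_in]) simp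
next
  case (add_in u v)
  then show ?case by (simp add: tadd_def)
next
  case (smult_in u c)
  then show ?case by (simp add: tsmult_def)
next
  case (br_in u v \<alpha> \<beta>)
  then show ?case by (simp add: brf_apply tmul_nil)
qed

lemma D_off:
  fixes p :: "nat \<Rightarrow> nat \<Rightarrow> 'a::field"
  assumes u: "u \<in> closure_br n p (brf A B)" and ij: "i \<noteq> j"
  shows "\<exists>s t z. z \<in> nichols_ideal n p \<and> u [i,j] = s * A (ed i) (ed j) - t * B (ed j) (ed i) + z [i,j]
     \<and> u [j,i] = t * A (ed j) (ed i) - s * B (ed i) (ed j) + z [j,i]"
  using u
proof induction
  case (gen_in v)
  have vz: "v [i,j] = 0" "v [j,i] = 0" using gen_in by (auto simp: Vsp_def gen_def)
  show ?case by (rule exI[of _ 0], rule exI[of _ 0], rule exI[of _ "\<lambda>_. 0"]) (simp add: ideal_zero vz)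
next
  case (ideal_in u)
  show ?case by (rule exI[of _ 0], rule exI[of _ 0], rule exI[of _ u]) (simp add: ideal_in)
next
  case (add_in u v)
  from add_in.IH(1) obtain s1 t1 z1 where 1: "z1 \<in> nichols_ideal n p" "u [i,j] = s1 * A (ed i) (ed j) - t1 * B (ed j) (ed i) + z1 [i,j]"
     "u [j,i] = t1 * A (ed j) (ed i) - s1 * B (ed i) (ed j) + z1 [j,i]" by blast
  from add_in.IH(2) obtain s2 t2 z2 where 2: "z2 \<in> nichols_ideal n p" "v [i,j] = s2 * A (ed i) (ed j) - t2 * B (ed j) (ed i) + z2 [i,j]"
     "v [j,i] = t2 * A (ed j) (ed i) - s2 * B (ed i) (ed j) + z2 [j,i]" by blast
  have z: "tadd z1 z2 \<in> nichols_ideal n p" by (rule ideal_add[OF 1(1) 2(1)])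
  show ?case
    apply (rule exI[of _ "s1 + s2"], rule exI[of _ "t1 + t2"], rule exI[of _ "tadd z1 z2"], intro conjI z)
    unfolding tadd_def 1(2,3) 2(2,3) by (simp_all add: algebra_simps)
next
  case (smult_in u c)
  from smult_in.IH obtain s1 t1 z1 where 1: "z1 \<in> nichols_ideal n p" "u [i,j] = s1 * A (ed i) (ed j) - t1 * B (ed j) (ed i) + z1 [i,j]"
     "u [j,i] = t1 * A (ed j) (ed i) - s1 * B (ed i) (ed j) + z1 [j,i]" by blast
  have z: "tsmult c z1 \<in> nichols_ideal n p" by (rule ideal_smult[OF 1(1)])
  show ?case
    apply (rule exI[of _ "c * s1"], rule exI[of _ "c * t1"], rule exI[of _ "tsmult c z1"], intro conjI z)
    unfolding tsmult_def 1(2,3) by (simp_all add: algebra_simps)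
next
  case (br_in u v \<alpha> \<beta>)
  have u0: "u [] = 0" by (rule closure_nil[OF br_in.hyps(1)])
  have v0: "v [] = 0" by (rule closure_nil[OF br_in.hyps(2)])
  have vij: "brf A B \<alpha> \<beta> u v [i,j] = A \<alpha> \<beta> * (u [i] * v [j]) - B \<alpha> \<beta> * (v [i] * u [j])"
    by (simp add: brf_apply tmul_len2 u0 v0)
  have vji: "brf A B \<alpha> \<beta> u v [j,i] = A \<alpha> \<beta> * (u [j] * v [i]) - B \<alpha> \<beta> * (v [j] * u [i])"
    by (simp add: brf_apply tmul_len2 u0 v0)
  have edne: "ed i \<noteq> ed j" using ij by (metis ed_def one_neq_zero)
  show ?case
  proof (cases "u [i] * v [j] \<noteq> 0")
    case True
    then have a: "\<alpha> = ed i" and b: "\<beta> = ed j" using homog_single br_in.hyps(3,4) by auto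
    have uj: "u [j] = 0" using homog_single[OF br_in.hyps(3), of j] a edne by auto
    show ?thesis
      by (rule exI[of _ "u [i] * v [j]"], rule exI[of _ 0], rule exI[of _ "\<lambda>_. 0"]) (unfold vij vji, simp add: a b uj ideal_zero algebra_simps)
  next
    case F1: False
    show ?thesis
    proof (cases "u [j] * v [i] \<noteq> 0")
      case True
      then have a: "\<alpha> = ed j" and b: "\<beta> = ed i" using homog_single br_in.hyps(3,4) by auto
      have ui: "u [i] = 0" using homog_single[OF br_in.hyps(3), of i] a edne by auto
      show ?thesis
        by (rule exI[of _ 0], rule exI[of _ "u [j] * v [i]"], rule exI[of _ "\<lambda>_. 0"]) (unfold vij vji, simp add: a b ui ideal_zero algebra_simps)
    next
      case False
      have z1: "u [i] * v [j] = 0" "u [j] * v [i] = 0" using F1 False by auto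
      show ?thesis by (rule exI[of _ 0], rule exI[of _ 0], rule exI[of _ "\<lambda>_. 0"]) (simp add: vij vji z1 ideal_zero mult.commute[of "v _" "u _"])
    qed
  qed
qed

lemma D_diag:
  fixes p :: "nat \<Rightarrow> nat \<Rightarrow> 'a::field"
  assumes u: "u \<in> closure_br n p (brf A B)"
  shows "\<exists>s z. z \<in> nichols_ideal n p \<and> u [i,i] = s * (A (ed i) (ed i) - B (ed i) (ed i)) + z [i,i]"
  using u
proof induction
  case (gen_in v)
  have vz: "v [i,i] = 0" using gen_in by (auto simp: Vsp_def gen_def)
  show ?case by (rule exI[of _ 0], rule exI[of _ "\<lambda>_. 0"]) (simp add: ideal_zero vz)
next
  case (ideal_in u)
  show ?case by (rule exI[of _ 0], rule exI[of _ u]) (simp add: ideal_in)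
next
  case (add_in u v)
  from add_in.IH(1) obtain s1 z1 where 1: "z1 \<in> nichols_ideal n p" "u [i,i] = s1 * (A (ed i) (ed i) - B (ed i) (ed i)) + z1 [i,i]" by blast
  from add_in.IH(2) obtain s2 z2 where 2: "z2 \<in> nichols_ideal n p" "v [i,i] = s2 * (A (ed i) (ed i) - B (ed i) (ed i)) + z2 [i,i]" by blast
  have z: "tadd z1 z2 \<in> nichols_ideal n p" by (rule ideal_add[OF 1(1) 2(1)])
  show ?case
    apply (rule exI[of _ "s1 + s2"], rule exI[of _ "tadd z1 z2"], intro conjI z)
    unfolding tadd_def 1(2) 2(2) by (simp add: algebra_simps)
next
  case (smult_in u c)
  from smult_in.IH obtain s1 z1 where 1: "z1 \<in> nichols_ideal n p" "u [i,i] = s1 * (A (ed i) (ed i) - B (ed i) (ed i)) + z1 [i,i]" by blast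
  have z: "tsmult c z1 \<in> nichols_ideal n p" by (rule ideal_smult[OF 1(1)])
  show ?case
    apply (rule exI[of _ "c * s1"], rule exI[of _ "tsmult c z1"], intro conjI z)
    unfolding tsmult_def 1(2) by (simp add: algebra_simps)
next
  case (br_in u v \<alpha> \<beta>)
  have u0: "u [] = 0" by (rule closure_nil[OF br_in.hyps(1)])
  have v0: "v [] = 0" by (rule closure_nil[OF br_in.hyps(2)])
  have vii: "brf A B \<alpha> \<beta> u v [i,i] = (A \<alpha> \<beta> - B \<alpha> \<beta>) * (u [i] * v [i])"
    by (simp add: brf_apply tmul_len2 u0 v0 algebra_simps)
  show ?case
  proof (cases "u [i] * v [i] \<noteq> 0")
    case True
    then have a: "\<alpha> = ed i" and b: "\<beta> = ed i" using homog_single br_in.hyps(3,4) by auto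
    show ?thesis
      by (rule exI[of _ "u [i] * v [i]"], rule exI[of _ "\<lambda>_. 0"]) (unfold vii, simp add: a b ideal_zero algebra_simps)
  next
    case False
    have z1: "u [i] * v [i] = 0" using False by auto
    show ?thesis by (rule exI[of _ 0], rule exI[of _ "\<lambda>_. 0"]) (simp add: vii z1 ideal_zero)
  qed
qed



lemma symc_single: "symc p [c] v = (if v = [c] then (1::'a::field) else 0)"
proof -
  have P: "{\<sigma>. \<sigma> permutes {..<Suc 0}} = {id}" by (auto simp: lessThan_Suc)
  have I: "Invs (Suc 0) id = {}" by (auto simp: Invs_def)
  have "(length v = Suc 0 \<and> v ! 0 = c) \<longleftrightarrow> v = [c]"
    by (cases v) auto
  then show ?thesis unfolding symc_alt by (simp add: P I)
qed

lemma symc_len2: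
  fixes p :: "nat \<Rightarrow> nat \<Rightarrow> 'a::field"
  assumes "length w = 2"
  shows "symc p w [a, b] = (if w = [a, b] then 1 else 0) + (if w = [b, a] then p b a else 0)"
proof -
  obtain c w1 where cw: "w = c # w1" "length w1 = 1" using assms by (cases w) auto
  obtain d where "w1 = [d]" using cw(2) by (cases w1) auto
  then have w: "w = [c] @ [d]" using cw by simp
  have "symc p w [a, b] = (\<Sum>k\<le>1. if length [a,b] = Suc 1 \<and> [a,b] ! k = d
      then (\<Prod>l\<in>{k<..1}. p ([a,b] ! l) d) * symc p [c] (take k [a,b] @ drop (Suc k) [a,b]) else 0)"
    unfolding w by (rule symc_snoc) simp
  also have "\<dots> = (if a = d then p b d * symc p [c] [b] else 0) + (if b = d then symc p [c] [a] else 0)"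
  proof -
    have e1: "{..1::nat} = {0, 1}" by auto
    have e2: "{0<..1::nat} = {1}" by auto
    have e3: "{1<..1::nat} = {}" by auto
    show ?thesis unfolding e1 e2 e3 by simp
  qed
  also have "\<dots> = (if w = [a, b] then 1 else 0) + (if w = [b, a] then p b a else 0)"
    unfolding symc_single w by (cases "a = d"; cases "b = d"; cases "c = a"; cases "c = b") simp_all
  finally show ?thesis .
qed

lemma if_mult_helper:
  fixes x q :: "'a::field"
  shows "x * ((if c1 then 1 else 0) + (if c2 then q else 0)) = (if c1 then x else 0) + (if c2 then q * x else 0)"
  by (cases c1; cases c2) (simp_all add: algebra_simps)

lemma qsym2:
  fixes f :: "nat list \<Rightarrow> 'a::field"
  assumes fin: "finite {w. f w \<noteq> 0}" and l2: "\<And>w. f w \<noteq> 0 \<Longrightarrow> length w = 2"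
  shows "qsym p f [a, b] = f [a, b] + p b a * f [b, a]"
proof -
  let ?S = "{w. f w \<noteq> 0}"
  have "qsym p f [a, b] = (\<Sum>w\<in>?S. f w * symc p w [a, b])" by (simp add: qsym_def)
  also have "\<dots> = (\<Sum>w\<in>?S. (if w = [a, b] then f w else 0) + (if w = [b, a] then p b a * f w else 0))"
  proof (rule sum.cong[OF refl])
    fix w assume "w \<in> ?S"
    then have lw: "length w = 2" using l2 by blast
    show "f w * symc p w [a, b] = (if w = [a, b] then f w else 0) + (if w = [b, a] then p b a * f w else 0)"
      unfolding symc_len2[OF lw] by (rule if_mult_helper)
  qed
  also have "\<dots> = (\<Sum>w\<in>?S. if w = [a, b] then f w else 0) + (\<Sum>w\<in>?S. if w = [b, a] then p b a * f w else 0)"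
    by (rule sum.distrib)
  also have "(\<Sum>w\<in>?S. if w = [a, b] then f w else 0) = f [a, b]"
    by (subst sum.delta[OF fin]) auto
  also have "(\<Sum>w\<in>?S. if w = [b, a] then p b a * f w else 0) = p b a * f [b, a]"
    by (subst sum.delta[OF fin]) auto
  finally show ?thesis .
qed

lemma ideal2:
  fixes z :: "nat list \<Rightarrow> 'a::field"
  assumes z: "z \<in> nichols_ideal n p"
  shows "z [a, b] + p b a * z [b, a] = 0"
proof -
  have fin: "finite {w. comp 2 z w \<noteq> 0}" using tensor_comp[OF ideal_tensor[OF z]] by (simp add: tensor_def)
  have "qsym p (comp 2 z) [a, b] = comp 2 z [a, b] + p b a * comp 2 z [b, a]"
    by (rule qsym2[OF fin]) (auto simp: comp_def split: if_splits)
  then show ?thesis using ideal_qsym[OF z, of 2] by (simp add: comp_def)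
qed

lemma symc_len_ne: "length w' \<noteq> length w \<Longrightarrow> symc p w w' = 0"
  unfolding symc_def by simp

lemma ideal_of_len2:
  fixes u :: "nat list \<Rightarrow> 'a::field"
  assumes t: "tensor n u" and l2: "\<And>w. u w \<noteq> 0 \<Longrightarrow> length w = 2"
    and id: "\<And>a b. u [a, b] + p b a * u [b, a] = 0"
  shows "u \<in> nichols_ideal n p"
  unfolding ideal_iff
proof (intro conjI allI impI)
  show "tensor n u" by (rule t)
next
  fix w :: "nat list" assume "length w < 2"
  then show "u w = 0" using l2 by force
next
  fix m :: nat assume "2 \<le> m"
  have fin: "finite {w. u w \<noteq> 0}" using t by (simp add: tensor_def)
  show "qsym p (comp m u) = (\<lambda>_. 0)"
  proof (cases "m = 2")
    case True
    have c: "comp m u = u"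
    proof
      fix w show "comp m u w = u w" using True l2[of w] by (cases "length w = 2") (auto simp: comp_def)
    qed
    show ?thesis
    proof
      fix w'
      show "qsym p (comp m u) w' = 0"
      proof (cases "length w' = 2")
        case True
        then obtain a b where "w' = [a, b]"
          by (metis (no_types, lifting) One_nat_def Suc_1 length_0_conv length_Suc_conv)
        then show ?thesis using c qsym2[OF fin l2, of p a b] id by simp
      next
        case False
        have "qsym p u w' = (\<Sum>w\<in>{w. u w \<noteq> 0}. u w * symc p w w')" by (simp add: qsym_def)
        also have "\<dots> = 0" using False l2 by (intro sum.neutral) (auto simp: symc_len_ne)
        finally show ?thesis using c by simp
      qed
    qed
  next
    case False
    have "comp m u = (\<lambda>_. 0)"
    proof
      fix w show "comp m u w = 0" using False l2[of w] by (cases "length w = 2") (auto simp: comp_def)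
    qed
    then show ?thesis by (simp add: qsym_def)
  qed
qed

lemma brf_gen_val:
  "brf A B \<alpha> \<beta> (gen i) (gen j) w = A \<alpha> \<beta> * (if w = [i, j] then 1 else 0) - B \<alpha> \<beta> * (if w = [j, i] then (1::'a::field) else 0)"
  by (simp add: brf_apply tmul_gen_gen)

lemma gen_helper:
  fixes A B q :: "'a::field"
  assumes "x1 \<Longrightarrow> x2 \<Longrightarrow> (A - B) * (1 + q) = 0" "x1 \<Longrightarrow> \<not> x2 \<Longrightarrow> A = q * B"
    "x2 \<Longrightarrow> \<not> x1 \<Longrightarrow> B = q * A"
  shows "A * (if x1 then 1 else 0) - B * (if x2 then 1 else 0) + q * (A * (if x2 then 1 else 0) - B * (if x1 then 1 else 0)) = 0"
proof (cases x1; cases x2)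
  assume "x1" "x2"
  then have "(A - B) * (1 + q) = 0" using assms by blast
  then show ?thesis using \<open>x1\<close> \<open>x2\<close> by (simp add: algebra_simps)
next
  assume "x1" "\<not> x2"
  then show ?thesis using assms(2) by simp
next
  assume "\<not> x1" "x2"
  then show ?thesis using assms(3) by simp
next
  assume "\<not> x1" "\<not> x2"
  then show ?thesis by simp
qed

lemma gen_br_ideal:
  fixes p :: "nat \<Rightarrow> nat \<Rightarrow> 'a::field"
  assumes i: "i < n" and j: "j < n"
    and off: "i \<noteq> j \<Longrightarrow> A (ed i) (ed j) = p j i * B (ed i) (ed j) \<and> B (ed i) (ed j) = p i j * A (ed i) (ed j)"
    and dia: "i = j \<Longrightarrow> (A (ed i) (ed j) - B (ed i) (ed j)) * (1 + p i i) = 0"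
  shows "brf A B (ed i) (ed j) (gen i) (gen j) \<in> nichols_ideal n p"
proof (rule ideal_of_len2)
  let ?X = "brf A B (ed i) (ed j) (gen i) (gen j) :: nat list \<Rightarrow> 'a"
  have sub: "{w. ?X w \<noteq> 0} \<subseteq> {[i, j], [j, i]}"
  proof
    fix w assume "w \<in> {w. ?X w \<noteq> 0}"
    then have nz: "?X w \<noteq> 0" by simp
    show "w \<in> {[i, j], [j, i]}"
    proof (rule ccontr)
      assume "w \<notin> {[i, j], [j, i]}"
      then have "w \<noteq> [i, j]" "w \<noteq> [j, i]" by auto
      then have "?X w = 0" by (simp only: brf_gen_val if_False mult_zero_right diff_zero)
      then show False using nz by simp
    qed
  qed
  show "tensor n ?X"
    unfolding tensor_def
  proof (intro conjI allI impI)
    show "finite {w. ?X w \<noteq> 0}" by (rule finite_subset[OF sub]) simp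
    fix w assume "?X w \<noteq> 0"
    then have "w \<in> {[i, j], [j, i]}" using sub by blast
    then show "set w \<subseteq> {..<n}" using i j by auto
  qed
  show "\<And>w. ?X w \<noteq> 0 \<Longrightarrow> length w = 2" using sub by auto
  fix a b
  let ?A = "A (ed i) (ed j)" and ?B = "B (ed i) (ed j)"
  have X: "\<And>w. ?X w = ?A * (if w = [i, j] then 1 else 0) - ?B * (if w = [j, i] then 1 else 0)"
    by (rule brf_gen_val)
  have Xab: "?X [a, b] = ?A * (if a = i \<and> b = j then 1 else 0) - ?B * (if a = j \<and> b = i then 1 else 0)"
    by (simp only: X list.inject simp_thms)
  have Xba: "?X [b, a] = ?A * (if a = j \<and> b = i then 1 else 0) - ?B * (if a = i \<and> b = j then 1 else 0)"
    by (simp only: X list.inject simp_thms conj_commute)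
  show "?X [a, b] + p b a * ?X [b, a] = 0"
    unfolding Xab Xba
  proof (rule gen_helper)
    assume h: "a = i \<and> b = j" "a = j \<and> b = i"
    have "i = j" using h by metis
    have "p b a = p i i" using h by metis
    then show "(?A - ?B) * (1 + p b a) = 0" using dia[OF \<open>i = j\<close>] by (metis \<open>p b a = p i i\<close>)
  next
    assume h: "a = i \<and> b = j" "\<not> (a = j \<and> b = i)"
    then have ij: "i \<noteq> j" by metis
    have "p b a = p j i" using h by metis
    then show "?A = p b a * ?B" using conjunct1[OF off[OF ij]] by simp
  next
    assume h: "a = j \<and> b = i" "\<not> (a = i \<and> b = j)"
    then have ij: "i \<noteq> j" by metis
    have "p b a = p i j" using h by metis
    then show "?B = p b a * ?A" using conjunct2[OF off[OF ij]] by simp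
  qed
qed



lemma Vsp_val:
  fixes c :: "nat \<Rightarrow> 'a::field"
  shows "(\<Sum>i<n. c i * gen i w) = (\<Sum>i<n. if w = [i] then c i else 0)"
  by (rule sum.cong) (auto simp: gen_def)

lemma Vsp_nz:
  fixes c :: "nat \<Rightarrow> 'a::field"
  assumes "(\<Sum>i<n. c i * gen i w) \<noteq> 0"
  shows "\<exists>k<n. w = [k]"
proof (rule ccontr)
  assume "\<not> (\<exists>k<n. w = [k])"
  then have "(\<Sum>i<n. if w = [i] then c i else 0) = 0" by (intro sum.neutral) auto
  then show False using assms Vsp_val[where c=c and n=n and w=w] by simp
qed

lemma Vsp_single:
  fixes c :: "nat \<Rightarrow> 'a::field"
  assumes "k < n"
  shows "(\<Sum>i<n. c i * gen i [k]) = c k"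
proof -
  have "(\<Sum>i<n. c i * gen i [k]) = (\<Sum>i<n. if i = k then c i else 0)"
    by (rule sum.cong) (auto simp: gen_def)
  also have "\<dots> = c k" using assms by (simp add: sum.delta)
  finally show ?thesis .
qed

lemma Vsp_tensor:
  fixes v :: "nat list \<Rightarrow> 'a::field"
  assumes "v \<in> Vsp n"
  shows "tensor n v"
proof -
  obtain c where v: "v = (\<lambda>w. \<Sum>i<n. c i * gen i w)" using assms by (auto simp: Vsp_def)
  have sub: "{w. v w \<noteq> 0} \<subseteq> (\<lambda>k. [k]) ` {..<n}"
    using Vsp_nz[where c=c and n=n] by (auto simp: v)
  show ?thesis
    unfolding tensor_def
  proof (intro conjI allI impI)
    show "finite {w. v w \<noteq> 0}" by (rule finite_subset[OF sub]) simp
    fix w assume "v w \<noteq> 0"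
    then show "set w \<subseteq> {..<n}" using sub by auto
  qed
qed

lemma Vmod_tensor:
  fixes u :: "nat list \<Rightarrow> 'a::field"
  assumes "u \<in> V_mod n p"
  shows "tensor n u"
proof -
  obtain v z where "u = tadd v z" "v \<in> Vsp n" "z \<in> nichols_ideal n p" using assms by (auto simp: V_mod_def)
  then show ?thesis by (simp add: tensor_add Vsp_tensor ideal_tensor)
qed

lemma Vmod_cases:
  fixes u :: "nat list \<Rightarrow> 'a::field"
  assumes u: "u \<in> V_mod n p" and h: "homog n \<alpha> u"
  shows "u \<in> nichols_ideal n p \<or> (\<exists>i<n. \<alpha> = ed i \<and> u = tsmult (u [i]) (gen i))"
proof -
  obtain v z where uvz: "u = tadd v z" and v: "v \<in> Vsp n" and z: "z \<in> nichols_ideal n p"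
    using u by (auto simp: V_mod_def)
  obtain c where vc: "v = (\<lambda>w. \<Sum>i<n. c i * gen i w)" using v by (auto simp: Vsp_def)
  show ?thesis
  proof (cases "\<exists>i<n. c i \<noteq> 0")
    case False
    have "v = (\<lambda>_. 0)" unfolding vc using False by (intro ext sum.neutral) auto
    then have "u = z" unfolding uvz by (auto simp: tadd_def)
    then show ?thesis using z by simp
  next
    case True
    then obtain i where i: "i < n" "c i \<noteq> 0" by auto
    have "u [i] = c i" unfolding uvz vc tadd_def using Vsp_single[OF i(1), of c] ideal_short[OF z, of "[i]"] by simp
    then have ui: "u [i] \<noteq> 0" using i by simp
    have a: "\<alpha> = ed i" by (rule homog_single[OF h ui])
    have "u = tsmult (u [i]) (gen i)"
    proof
      fix w
      show "u w = tsmult (u [i]) (gen i) w"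
      proof (cases "u w = 0")
        case True
        then show ?thesis
        proof (cases "w = [i]")
          case True
          then show ?thesis by (simp add: tsmult_def gen_def)
        next
          case False
          then show ?thesis using \<open>u w = 0\<close> by (simp add: tsmult_def gen_def)
        qed
      next
        case False
        then have "w = [i]" using homog_ed_word h a by blast
        then show ?thesis by (simp add: tsmult_def gen_def)
      qed
    qed
    then show ?thesis using i a by blast
  qed
qed

lemma Vsp_zero: "(\<lambda>_. 0 :: 'a::field) \<in> Vsp n"
  unfolding Vsp_def by (rule CollectI, rule exI[of _ "\<lambda>_. 0"]) simp

lemma Vsp_add:
  fixes v1 v2 :: "nat list \<Rightarrow> 'a::field"
  assumes "v1 \<in> Vsp n" "v2 \<in> Vsp n"
  shows "tadd v1 v2 \<in> Vsp n"
proof -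
  obtain c1 where 1: "v1 = (\<lambda>w. \<Sum>i<n. c1 i * gen i w)" using assms(1) by (auto simp: Vsp_def)
  obtain c2 where 2: "v2 = (\<lambda>w. \<Sum>i<n. c2 i * gen i w)" using assms(2) by (auto simp: Vsp_def)
  have e: "tadd v1 v2 = (\<lambda>w. \<Sum>i<n. (c1 i + c2 i) * gen i w)"
    unfolding 1 2 tadd_def by (simp add: sum.distrib distrib_right)
  show ?thesis unfolding Vsp_def by (rule CollectI, rule exI[of _ "\<lambda>i. c1 i + c2 i"]) (simp add: e)
qed

lemma Vsp_smult:
  fixes v :: "nat list \<Rightarrow> 'a::field"
  assumes "v \<in> Vsp n"
  shows "tsmult a v \<in> Vsp n"
proof -
  obtain c where 1: "v = (\<lambda>w. \<Sum>i<n. c i * gen i w)" using assms by (auto simp: Vsp_def)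
  have e: "tsmult a v = (\<lambda>w. \<Sum>i<n. (a * c i) * gen i w)"
    unfolding 1 tsmult_def by (simp add: sum_distrib_left mult.assoc)
  show ?thesis unfolding Vsp_def by (rule CollectI, rule exI[of _ "\<lambda>i. a * c i"]) (simp add: e)
qed

lemma Vmod_intro: "v \<in> Vsp n \<Longrightarrow> z \<in> nichols_ideal n p \<Longrightarrow> tadd v z \<in> V_mod n p"
  unfolding V_mod_def by blast

lemma tadd_zero_left: "tadd (\<lambda>_. 0 :: 'a::field) u = u"
  by (simp add: tadd_def)

lemma tadd_zero_right: "tadd u (\<lambda>_. 0 :: 'a::field) = u"
  by (simp add: tadd_def)

lemma ideal_Vmod: "z \<in> nichols_ideal n p \<Longrightarrow> (z :: nat list \<Rightarrow> 'a::field) \<in> V_mod n p"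
  using Vmod_intro[OF Vsp_zero] tadd_zero_left by metis

lemma tmul_smult_smult:
  fixes x y :: "nat list \<Rightarrow> 'a::field"
  shows "tmul (tsmult a x) (tsmult b y) = tsmult (a * b) (tmul x y)"
  by (rule ext) (simp add: tmul_def tsmult_def sum_distrib_left mult_ac)

lemma brf_bilin:
  fixes x y :: "nat list \<Rightarrow> 'a::field"
  shows "brf A B \<alpha> \<beta> (tsmult a x) (tsmult b y) = tsmult (a * b) (brf A B \<alpha> \<beta> x y)"
  unfolding brf_def tmul_smult_smult by (rule ext) (simp add: tsmult_def tdiff_def algebra_simps)

lemma brf_ideal_left:
  fixes u v :: "nat list \<Rightarrow> 'a::field"
  assumes "u \<in> nichols_ideal n p" "tensor n v"
  shows "brf A B \<alpha> \<beta> u v \<in> nichols_ideal n p"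
  unfolding brf_def using assms by (intro ideal_diff ideal_smult right_ideal left_ideal)

lemma brf_ideal_right:
  fixes u v :: "nat list \<Rightarrow> 'a::field"
  assumes "v \<in> nichols_ideal n p" "tensor n u"
  shows "brf A B \<alpha> \<beta> u v \<in> nichols_ideal n p"
  unfolding brf_def using assms by (intro ideal_diff ideal_smult right_ideal left_ideal)

lemma closure_eq_Vmod:
  fixes p :: "nat \<Rightarrow> nat \<Rightarrow> 'a::field"
  assumes gens: "\<And>i j. i < n \<Longrightarrow> j < n \<Longrightarrow> brf A B (ed i) (ed j) (gen i) (gen j) \<in> nichols_ideal n p"
  shows "closure_br n p (brf A B) = V_mod n p"
proof
  show "closure_br n p (brf A B) \<subseteq> V_mod n p"
  proof
    fix x assume "x \<in> closure_br n p (brf A B)"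
    then show "x \<in> V_mod n p"
    proof induction
      case (gen_in v)
      then show ?case using Vmod_intro[OF gen_in ideal_zero] tadd_zero_right by metis
    next
      case (ideal_in u)
      then show ?case by (rule ideal_Vmod)
    next
      case (add_in u v)
      obtain v1 z1 where 1: "u = tadd v1 z1" "v1 \<in> Vsp n" "z1 \<in> nichols_ideal n p" using add_in.IH(1) by (auto simp: V_mod_def)
      obtain v2 z2 where 2: "v = tadd v2 z2" "v2 \<in> Vsp n" "z2 \<in> nichols_ideal n p" using add_in.IH(2) by (auto simp: V_mod_def)
      have "tadd u v = tadd (tadd v1 v2) (tadd z1 z2)" unfolding 1 2 by (rule ext) (simp add: tadd_def algebra_simps)
      then show ?case using Vmod_intro[OF Vsp_add[OF 1(2) 2(2)] ideal_add[OF 1(3) 2(3)]] by simp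
    next
      case (smult_in u c)
      obtain v1 z1 where 1: "u = tadd v1 z1" "v1 \<in> Vsp n" "z1 \<in> nichols_ideal n p" using smult_in.IH by (auto simp: V_mod_def)
      have "tsmult c u = tadd (tsmult c v1) (tsmult c z1)" unfolding 1 by (rule ext) (simp add: tadd_def tsmult_def algebra_simps)
      then show ?case using Vmod_intro[OF Vsp_smult[OF 1(2)] ideal_smult[OF 1(3)]] by simp
    next
      case (br_in u v \<alpha> \<beta>)
      have tu: "tensor n u" by (rule Vmod_tensor[OF br_in.IH(1)])
      have tv: "tensor n v" by (rule Vmod_tensor[OF br_in.IH(2)])
      have "brf A B \<alpha> \<beta> u v \<in> nichols_ideal n p"
      proof (cases "u \<in> nichols_ideal n p")
        case True
        then show ?thesis using tv by (rule brf_ideal_left)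
      next
        case F1: False
        show ?thesis
        proof (cases "v \<in> nichols_ideal n p")
          case True
          then show ?thesis using tu by (rule brf_ideal_right)
        next
          case False
          obtain i where i: "i < n" "\<alpha> = ed i" "u = tsmult (u [i]) (gen i)"
            using Vmod_cases[OF br_in.IH(1) br_in.hyps(3)] F1 by blast
          obtain j where j: "j < n" "\<beta> = ed j" "v = tsmult (v [j]) (gen j)"
            using Vmod_cases[OF br_in.IH(2) br_in.hyps(4)] False by blast
          have "brf A B \<alpha> \<beta> u v = tsmult (u [i] * v [j]) (brf A B (ed i) (ed j) (gen i) (gen j))"
            using brf_bilin[of A B \<alpha> \<beta> "u [i]" "gen i" "v [j]" "gen j"] i(2,3) j(2,3) by metis
          then show ?thesis using gens[OF i(1) j(1)] by (simp add: ideal_smult)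
        qed
      qed
      then show ?case by (rule ideal_Vmod)
    qed
  qed
next
  show "V_mod n p \<subseteq> closure_br n p (brf A B)"
  proof
    fix x assume "x \<in> V_mod n p"
    then obtain v z where "x = tadd v z" "v \<in> Vsp n" "z \<in> nichols_ideal n p" by (auto simp: V_mod_def)
    then show "x \<in> closure_br n p (brf A B)" by (auto intro: closure_br.intros)
  qed
qed



lemma gen_in_closure:
  assumes "i < n"
  shows "(gen i :: nat list \<Rightarrow> 'a::field) \<in> closure_br n p br"
proof (rule closure_br.gen_in)
  have ge: "(gen i :: nat list \<Rightarrow> 'a) = (\<lambda>w. \<Sum>k<n. (if k = i then 1 else 0) * gen k w)"
  proof
    fix w
    have "(\<Sum>k<n. (if k = i then 1 else 0) * (gen k w :: 'a)) = (\<Sum>k<n. if k = i then gen k w else 0)"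
      by (rule sum.cong) auto
    also have "\<dots> = gen i w" using assms by (simp add: sum.delta)
    finally show "(gen i w :: 'a) = (\<Sum>k<n. (if k = i then 1 else 0) * gen k w)" by (rule sym)
  qed
  show "(gen i :: nat list \<Rightarrow> 'a) \<in> Vsp n" unfolding Vsp_def by (rule CollectI, rule exI[of _ "\<lambda>k. if k = i then (1::'a) else 0"]) (simp add: ge)
qed

lemma brgen_in:
  fixes p :: "nat \<Rightarrow> nat \<Rightarrow> 'a::field"
  assumes "i < n" "j < n"
  shows "brf A B (ed i) (ed j) (gen i) (gen j) \<in> closure_br n p (brf A B)"
  by (rule closure_br.br_in[OF gen_in_closure[OF assms(1)] gen_in_closure[OF assms(2)] gen_homog[OF assms(1)] gen_homog[OF assms(2)]])

lemma brgen_ij: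
  assumes "i \<noteq> j"
  shows "brf A B \<alpha> \<beta> (gen i) (gen j) [i, j] = (A \<alpha> \<beta> :: 'a::field)"
    "brf A B \<alpha> \<beta> (gen i) (gen j) [j, i] = - (B \<alpha> \<beta> :: 'a::field)"
  using assms by (simp_all add: brf_gen_val)

lemma brgen_ii:
  shows "brf A B \<alpha> \<beta> (gen i) (gen i) [i, i] = (A \<alpha> \<beta> - B \<alpha> \<beta> :: 'a::field)"
  by (simp add: brf_gen_val)

lemma zero_off:
  fixes z :: "nat list \<Rightarrow> 'a::field"
  assumes z: "z \<in> nichols_ideal n p" and pq: "p i j * p j i \<noteq> 1"
  shows "z [i, j] = 0 \<and> z [j, i] = 0"
proof -
  have h1: "z [i, j] + p j i * z [j, i] = 0" by (rule ideal2[OF z])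
  have h2: "z [j, i] + p i j * z [i, j] = 0" by (rule ideal2[OF z])
  have "z [i, j] * (1 - p i j * p j i) = (z [i, j] + p j i * z [j, i]) - p j i * (z [j, i] + p i j * z [i, j])"
    by (simp add: algebra_simps)
  then have "z [i, j] * (1 - p i j * p j i) = 0" using h1 h2 by simp
  then have a: "z [i, j] = 0" using pq by simp
  then have "z [j, i] = 0" using h2 by simp
  then show ?thesis using a by simp
qed

abbreviation "BRf n p \<equiv> brf (\<lambda>_ _. 1) (pchar n p)"
abbreviation "LLf n p \<equiv> brf (\<lambda>\<alpha> \<beta>. pchar n p \<beta> \<alpha>) (pchar n p)"
abbreviation "CMf \<equiv> brf (\<lambda>_ _. 1) (\<lambda>_ _. 1)"

lemma F_BR_CM:
  fixes p :: "nat \<Rightarrow> nat \<Rightarrow> 'a::field"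
  assumes sub: "closure_br n p (BRf n p) \<subseteq> closure_br n p CMf"
    and i: "i < n" and j: "j < n" and ij: "i \<noteq> j" and pq: "p i j * p j i \<noteq> 1"
  shows "p i j = 1"
proof -
  let ?x = "BRf n p (ed i) (ed j) (gen i) (gen j)"
  have "?x \<in> closure_br n p CMf" using sub brgen_in[OF i j] by blast
  from D_off[OF this ij] obtain s t z where z: "z \<in> nichols_ideal n p"
    and e1: "?x [i, j] = s * 1 - t * 1 + z [i, j]" and e2: "?x [j, i] = t * 1 - s * 1 + z [j, i]" by blast
  have zz: "z [i, j] = 0" "z [j, i] = 0" using zero_off[OF z pq] by auto
  have v1: "?x [i, j] = 1" and v2: "?x [j, i] = - p i j"
    using brgen_ij[OF ij, of "\<lambda>_ _. 1" "pchar n p" "ed i" "ed j"] pchar_ed[OF i j, of p] by simp_all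
  have "1 = s - t" using e1 v1 zz by simp
  moreover have "- p i j = t - s" using e2 v2 zz by simp
  ultimately show ?thesis by (simp add: algebra_simps)
qed

lemma F_CM_BR:
  fixes p :: "nat \<Rightarrow> nat \<Rightarrow> 'a::field"
  assumes sub: "closure_br n p CMf \<subseteq> closure_br n p (BRf n p)"
    and i: "i < n" and j: "j < n" and ij: "i \<noteq> j" and pq: "p i j * p j i = 1"
  shows "p j i = 1"
proof -
  let ?y = "CMf (ed i) (ed j) (gen i) (gen j) :: nat list \<Rightarrow> 'a"
  have "?y \<in> closure_br n p (BRf n p)" using sub brgen_in[OF i j] by blast
  from D_off[OF this ij] obtain s t z where z: "z \<in> nichols_ideal n p"
    and e1: "?y [i, j] = s * 1 - t * pchar n p (ed j) (ed i) + z [i, j]"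
    and e2: "?y [j, i] = t * 1 - s * pchar n p (ed i) (ed j) + z [j, i]" by blast
  have h: "z [i, j] + p j i * z [j, i] = 0" by (rule ideal2[OF z])
  have v1: "?y [i, j] = 1" and v2: "?y [j, i] = - 1"
    using brgen_ij[OF ij, of "\<lambda>_ _. 1" "\<lambda>_ _. 1" "ed i" "ed j"] by simp_all
  have e1': "?y [i, j] = s - t * p j i + z [i, j]" using e1 pchar_ed[OF j i, of p] by simp
  have e2': "?y [j, i] = t - s * p i j + z [j, i]" using e2 pchar_ed[OF i j, of p] by simp
  have "?y [i, j] + p j i * ?y [j, i] = s * (1 - p i j * p j i) + (z [i, j] + p j i * z [j, i])"
    unfolding e1' e2' by (simp add: algebra_simps)
  then have "1 - p j i = 0" using v1 v2 pq h by simp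
  then show ?thesis by simp
qed

lemma F_BR_LL:
  fixes p :: "nat \<Rightarrow> nat \<Rightarrow> 'a::field"
  assumes sub: "closure_br n p (BRf n p) \<subseteq> closure_br n p (LLf n p)"
    and i: "i < n" and j: "j < n" and ij: "i \<noteq> j" and pq: "p i j * p j i \<noteq> 1"
    and nz: "p i j \<noteq> 0"
  shows "p j i = 1"
proof -
  let ?x = "BRf n p (ed i) (ed j) (gen i) (gen j)"
  have "?x \<in> closure_br n p (LLf n p)" using sub brgen_in[OF i j] by blast
  from D_off[OF this ij] obtain s t z where z: "z \<in> nichols_ideal n p"
    and e1: "?x [i, j] = s * pchar n p (ed j) (ed i) - t * pchar n p (ed j) (ed i) + z [i, j]"
    and e2: "?x [j, i] = t * pchar n p (ed i) (ed j) - s * pchar n p (ed i) (ed j) + z [j, i]" by blast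
  have zz: "z [i, j] = 0" "z [j, i] = 0" using zero_off[OF z pq] by auto
  have v1: "?x [i, j] = 1" and v2: "?x [j, i] = - p i j"
    using brgen_ij[OF ij, of "\<lambda>_ _. 1" "pchar n p" "ed i" "ed j"] pchar_ed[OF i j, of p] by simp_all
  have a1: "1 = (s - t) * p j i" using e1 v1 zz pchar_ed[OF j i, of p] by (simp add: algebra_simps)
  have a2: "- p i j = (t - s) * p i j" using e2 v2 zz pchar_ed[OF i j, of p] by (simp add: algebra_simps)
  have "p i j * (s - t - 1) = 0" using a2 by (simp add: algebra_simps)
  then have "s - t = 1" using nz by simp
  then show ?thesis using a1 by simp
qed

lemma F_LL_BR:
  fixes p :: "nat \<Rightarrow> nat \<Rightarrow> 'a::field"
  assumes sub: "closure_br n p (LLf n p) \<subseteq> closure_br n p (BRf n p)"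
    and i: "i < n" and j: "j < n" and ij: "i \<noteq> j" and pq: "p i j * p j i = 1"
  shows "p i j = 1"
proof -
  let ?y = "LLf n p (ed i) (ed j) (gen i) (gen j)"
  have "?y \<in> closure_br n p (BRf n p)" using sub brgen_in[OF i j] by blast
  from D_off[OF this ij] obtain s t z where z: "z \<in> nichols_ideal n p"
    and e1: "?y [i, j] = s * 1 - t * pchar n p (ed j) (ed i) + z [i, j]"
    and e2: "?y [j, i] = t * 1 - s * pchar n p (ed i) (ed j) + z [j, i]" by blast
  have h: "z [i, j] + p j i * z [j, i] = 0" by (rule ideal2[OF z])
  have v1: "?y [i, j] = p j i" and v2: "?y [j, i] = - p i j"
    using brgen_ij[OF ij, of "\<lambda>\<alpha> \<beta>. pchar n p \<beta> \<alpha>" "pchar n p" "ed i" "ed j"] pchar_ed[OF i j, of p] pchar_ed[OF j i, of p] by simp_all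
  have e1': "?y [i, j] = s - t * p j i + z [i, j]" using e1 pchar_ed[OF j i, of p] by simp
  have e2': "?y [j, i] = t - s * p i j + z [j, i]" using e2 pchar_ed[OF i j, of p] by simp
  have "?y [i, j] + p j i * ?y [j, i] = s * (1 - p i j * p j i) + (z [i, j] + p j i * z [j, i])"
    unfolding e1' e2' by (simp add: algebra_simps)
  then have "p j i * (1 - p i j) = 0" using v1 v2 pq h by (simp add: algebra_simps)
  moreover have "p j i \<noteq> 0" using pq by auto
  ultimately show ?thesis by simp
qed

lemma F_diag:
  fixes p :: "nat \<Rightarrow> nat \<Rightarrow> 'a::field"
  assumes sub: "closure_br n p (BRf n p) \<subseteq> closure_br n p (brf A B)"
    and i: "i < n" and AB: "A (ed i) (ed i) = B (ed i) (ed i)"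
  shows "(p i i)\<^sup>2 = 1"
proof -
  let ?x = "BRf n p (ed i) (ed i) (gen i) (gen i)"
  have "?x \<in> closure_br n p (brf A B)" using sub brgen_in[OF i i] by blast
  from D_diag[OF this, of i] obtain s z where z: "z \<in> nichols_ideal n p"
    and e: "?x [i, i] = s * (A (ed i) (ed i) - B (ed i) (ed i)) + z [i, i]" by blast
  have v: "?x [i, i] = 1 - p i i" using brgen_ii[of "\<lambda>_ _. 1" "pchar n p" "ed i" "ed i" i] pchar_ed[OF i i, of p] by simp
  have h: "z [i, i] + p i i * z [i, i] = 0" by (rule ideal2[OF z])
  have xz: "1 - p i i = z [i, i]" using e v AB by simp
  show ?thesis
  proof (cases "p i i = -1")
    case True
    then show ?thesis by simp
  next
    case False
    have "z [i, i] * (1 + p i i) = 0" using h by (simp add: algebra_simps)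
    moreover have "1 + p i i \<noteq> 0" using False by (metis add.commute add_eq_0_iff)
    ultimately have "z [i, i] = 0" by simp
    then have "p i i = 1" using xz by simp
    then show ?thesis by simp
  qed
qed



theorem proposition5p2:
  fixes n :: nat and p :: "nat \<Rightarrow> nat \<Rightarrow> 'a::field_char_0"
  assumes "\<forall>i<n. \<forall>j<n. p i j \<noteq> 0"
  shows "(LV n p = LV_L n p \<longleftrightarrow> LV n p = LV_minus n p)
    \<and> (LV n p = LV_minus n p \<longleftrightarrow>
         ((\<forall>i<n. (p i i)\<^sup>2 = 1) \<and> (\<forall>i<n. \<forall>j<n. i \<noteq> j \<longrightarrow> p i j = 1 \<and> p j i = 1)))
    \<and> (((\<forall>i<n. (p i i)\<^sup>2 = 1) \<and> (\<forall>i<n. \<forall>j<n. i \<noteq> j \<longrightarrow> p i j = 1 \<and> p j i = 1))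
         \<longrightarrow> LV n p = LV_L n p \<and> LV_L n p = V_mod n p)"
proof -
  define C where "C = ((\<forall>i<n. (p i i)\<^sup>2 = 1) \<and> (\<forall>i<n. \<forall>j<n. i \<noteq> j \<longrightarrow> p i j = 1 \<and> p j i = 1))"
  have nz: "\<And>i j. i < n \<Longrightarrow> j < n \<Longrightarrow> p i j \<noteq> 0" using assms by blast
  have LVe: "LV n p = closure_br n p (BRf n p)" by (simp add: LV_def braided_brf)
  have LLe: "LV_L n p = closure_br n p (LLf n p)" by (simp add: LV_L_def L_brf)
  have CMe: "LV_minus n p = closure_br n p CMf" by (simp add: LV_minus_def comm_brf)
  have Cc: "LV n p = V_mod n p \<and> LV_L n p = V_mod n p \<and> LV_minus n p = V_mod n p" if c: C
  proof -
    have d: "\<And>i. i < n \<Longrightarrow> (p i i)\<^sup>2 = 1" and o: "\<And>i j. i < n \<Longrightarrow> j < n \<Longrightarrow> i \<noteq> j \<Longrightarrow> p i j = 1 \<and> p j i = 1"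
      using c unfolding C_def by blast+
    have sq: "\<And>i. i < n \<Longrightarrow> (1 - p i i) * (1 + p i i) = 0"
    proof -
      fix i assume "i < n"
      have "(1 - p i i) * (1 + p i i) = 1 - (p i i)\<^sup>2" by (simp add: algebra_simps power2_eq_square)
      then show "(1 - p i i) * (1 + p i i) = 0" using d[OF \<open>i < n\<close>] by simp
    qed
    have "closure_br n p (BRf n p) = V_mod n p"
    proof (rule closure_eq_Vmod)
      fix i j assume i: "i < n" and j: "j < n"
      show "BRf n p (ed i) (ed j) (gen i) (gen j) \<in> nichols_ideal n p"
      proof (rule gen_br_ideal[OF i j])
        assume ij: "i \<noteq> j"
        then show "1 = p j i * pchar n p (ed i) (ed j) \<and> pchar n p (ed i) (ed j) = p i j * 1"
          using o[OF i j ij] pchar_ed[OF i j, of p] by simp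
      next
        assume ij: "i = j"
        then show "(1 - pchar n p (ed i) (ed j)) * (1 + p i i) = 0"
          using sq[OF i] pchar_ed[OF i j, of p] by simp
      qed
    qed
    moreover have "closure_br n p (LLf n p) = V_mod n p"
    proof (rule closure_eq_Vmod)
      fix i j assume i: "i < n" and j: "j < n"
      show "LLf n p (ed i) (ed j) (gen i) (gen j) \<in> nichols_ideal n p"
      proof (rule gen_br_ideal[OF i j])
        assume ij: "i \<noteq> j"
        then show "pchar n p (ed j) (ed i) = p j i * pchar n p (ed i) (ed j) \<and> pchar n p (ed i) (ed j) = p i j * pchar n p (ed j) (ed i)"
          using o[OF i j ij] pchar_ed[OF i j, of p] pchar_ed[OF j i, of p] by simp
      next
        assume ij: "i = j"
        then show "(pchar n p (ed j) (ed i) - pchar n p (ed i) (ed j)) * (1 + p i i) = 0"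
          by simp
      qed
    qed
    moreover have "closure_br n p CMf = V_mod n p"
    proof (rule closure_eq_Vmod)
      fix i j assume i: "i < n" and j: "j < n"
      show "CMf (ed i) (ed j) (gen i) (gen j) \<in> nichols_ideal n p"
      proof (rule gen_br_ideal[OF i j])
        assume ij: "i \<noteq> j"
        then show "(1::'a) = p j i * 1 \<and> (1::'a) = p i j * 1"
          using o[OF i j ij] by simp
      next
        assume ij: "i = j"
        then show "((1::'a) - 1) * (1 + p i i) = 0" by simp
      qed
    qed
    ultimately show ?thesis using LVe LLe CMe by simp
  qed
  have Am: "C" if e: "LV n p = LV_minus n p"
  proof -
    have s1: "closure_br n p (BRf n p) \<subseteq> closure_br n p CMf" using e LVe CMe by simp
    have s2: "closure_br n p CMf \<subseteq> closure_br n p (BRf n p)" using e LVe CMe by simp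
    have d: "\<forall>i<n. (p i i)\<^sup>2 = 1"
    proof (intro allI impI)
      fix i assume i: "i < n"
      show "(p i i)\<^sup>2 = 1" by (rule F_diag[OF s1 i]) simp
    qed
    have o: "\<forall>i<n. \<forall>j<n. i \<noteq> j \<longrightarrow> p i j = 1 \<and> p j i = 1"
    proof (intro allI impI)
      fix i j assume i: "i < n" and j: "j < n" and ij: "i \<noteq> j"
      show "p i j = 1 \<and> p j i = 1"
      proof (cases "p i j * p j i = 1")
        case True
        have "p j i = 1" by (rule F_CM_BR[OF s2 i j ij True])
        then show ?thesis using True by simp
      next
        case False
        have a: "p i j = 1" by (rule F_BR_CM[OF s1 i j ij False])
        have "p j i * p i j \<noteq> 1" using False by (simp add: mult.commute)
        then have "p j i = 1" using ij by (intro F_BR_CM[OF s1 j i]) auto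
        then show ?thesis using a False by simp
      qed
    qed
    show ?thesis unfolding C_def using d o by blast
  qed
  have Bm: "C" if e: "LV n p = LV_L n p"
  proof -
    have s1: "closure_br n p (BRf n p) \<subseteq> closure_br n p (LLf n p)" using e LVe LLe by simp
    have s2: "closure_br n p (LLf n p) \<subseteq> closure_br n p (BRf n p)" using e LVe LLe by simp
    have d: "\<forall>i<n. (p i i)\<^sup>2 = 1"
    proof (intro allI impI)
      fix i assume i: "i < n"
      show "(p i i)\<^sup>2 = 1" by (rule F_diag[OF s1 i]) simp
    qed
    have o: "\<forall>i<n. \<forall>j<n. i \<noteq> j \<longrightarrow> p i j = 1 \<and> p j i = 1"
    proof (intro allI impI)
      fix i j assume i: "i < n" and j: "j < n" and ij: "i \<noteq> j"
      show "p i j = 1 \<and> p j i = 1"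
      proof (cases "p i j * p j i = 1")
        case True
        have "p i j = 1" by (rule F_LL_BR[OF s2 i j ij True])
        then show ?thesis using True by simp
      next
        case False
        have a: "p j i = 1" by (rule F_BR_LL[OF s1 i j ij False nz[OF i j]])
        have "p j i * p i j \<noteq> 1" using False by (simp add: mult.commute)
        then have "p i j = 1" using ij nz[OF j i] by (intro F_BR_LL[OF s1 j i]) auto
        then show ?thesis using a False by simp
      qed
    qed
    show ?thesis unfolding C_def using d o by blast
  qed
  have part1: "LV n p = LV_L n p \<longleftrightarrow> LV n p = LV_minus n p"
    using Am Bm Cc by metis
  have part2: "LV n p = LV_minus n p \<longleftrightarrow> C"
    using Am Cc by metis
  have part3: "C \<longrightarrow> LV n p = LV_L n p \<and> LV_L n p = V_mod n p"
    using Cc by metis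
  show ?thesis using part1 part2 part3 unfolding C_def by blast
qed

end
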